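(* Let $n\ge1$, $k\ge1$. The operations $\gamma\mapsto\sigma_l\cdot\gamma$ ($l\in\{1,\dots,k-1\}$) on $\Sigma_n(k)$ extend (uniquely) to an action of $\mathfrak S_k$ on $\Sigma_n(k)$. Moreover, $P$ is equivariant for this action and the action of $\mathfrak S_k$ on sequences, and preserves stabilisers: for all $\gamma\in\Sigma_n(k)$ and $\pi\in\mathfrak S_k$, $\pi\cdot P(\gamma)=P(\gamma)$ if and only if $\pi\cdot\gamma=\gamma$.
   Context: Let $n\ge1$. $\mathfrak S_n$ is the symmetric group on $\{1,\dots,n\}$; products are composed right to left. $\mathsf T_n$ is the set of transpositions; a transposition is always written $(i\,j)$ with $i<j$. For $\sigma\in\mathfrak S_n$, $|\sigma|=n-(\text{number of cycles of }\sigma\text{, fixed points counted})$; $\sigma_1\preccurlyeq\sigma_2$ iff $|\sigma_2|=|\sigma_1|+|\sigma_1^{-1}\sigma_2|$. $\Sigma_n(k)=\{(\tau_1,\dots,\tau_k)\in(\mathsf T_n)^k : |\tau_1\cdots\tau_k|=k,\ \tau_1\cdots\tau_k\preccurlyeq(1\,2\,\dots\,n)\}$. $P:\Sigma_n(k)\to\{1,\dots,n-1\}^k$ sends $((i_1\,j_1),\dots,(i_k\,j_k))$ to $(i_1,\dots,i_k)$. The group $\mathfrak S_k$ acts on sequences by $\pi\cdot(x_1,\dots,x_k)=(x_{\pi^{-1}(1)},\dots,x_{\pi^{-1}(k)})$. Let $\sigma_l=(l\;l+1)\in\mathfrak S_k$ be the Coxeter generators. For $(g_1,\dots,g_k)\in(\mathsf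 T_n)^k$ define $\beta_l\cdot(g_1,\dots,g_k)=(g_1,\dots,g_{l-1},g_{l+1},g_{l+1}^{-1}g_lg_{l+1},g_{l+2},\dots,g_k)$ and $\beta_l^{-1}\cdot(g_1,\dots,g_k)=(g_1,\dots,g_{l-1},g_lg_{l+1}g_l^{-1},g_l,g_{l+2},\dots,g_k)$. For $\gamma=((i_1\,j_1),\dots,(i_k\,j_k))\in\Sigma_n(k)$ define $\sigma_l\cdot\gamma=\gamma$ if $i_l=i_{l+1}$, $\sigma_l\cdot\gamma=\beta_l\cdot\gamma$ if $i_l<i_{l+1}$, and $\sigma_l\cdot\gamma=\beta_l^{-1}\cdot\gamma$ if $i_l>i_{l+1}$ (this lies in $\Sigma_n(k)$). *)

theory Defs
  imports "HOL-Combinatorics.Combinatorics"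
begin

text \<open>Permutations of {1..n} are functions nat => nat (identity outside {1..n}).
  Composition is function composition (right to left).\<close>

definition transp_set :: "nat \<Rightarrow> (nat \<Rightarrow> nat) set" where
  "transp_set n = {transpose i j | i j. 1 \<le> i \<and> i < j \<and> j \<le> n}"

definition orbit_of :: "(nat \<Rightarrow> nat) \<Rightarrow> nat \<Rightarrow> nat set" where
  "orbit_of \<sigma> x = {y. \<exists>m. (\<sigma> ^^ m) x = y}"

definition ncycles :: "nat \<Rightarrow> (nat \<Rightarrow> nat) \<Rightarrow> nat" where
  "ncycles n \<sigma> = card (orbit_of \<sigma> ` {1..n})"

definition plen :: "nat \<Rightarrow> (nat \<Rightarrow> nat) \<Rightarrow> nat" where
  "plen n \<sigma> = n - ncycles n \<sigma>"

definition pleq :: "nat \<Rightarrow> (nat \<Rightarrow> nat) \<Rightarrow> (nat \<Rightarrow> nat) \<Rightarrow> bool" where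
  "pleq n \<sigma>1 \<sigma>2 \<longleftrightarrow> plen n \<sigma>2 = plen n \<sigma>1 + plen n (inv \<sigma>1 \<circ> \<sigma>2)"

definition long_cycle :: "nat \<Rightarrow> nat \<Rightarrow> nat" where
  "long_cycle n x = (if 1 \<le> x \<and> x < n then x + 1 else if x = n then 1 else x)"

definition lprod :: "(nat \<Rightarrow> nat) list \<Rightarrow> nat \<Rightarrow> nat" where
  "lprod gs = foldr (\<circ>) gs id"

definition Sigma_nk :: "nat \<Rightarrow> nat \<Rightarrow> (nat \<Rightarrow> nat) list set" where
  "Sigma_nk n k = {gs. length gs = k \<and> set gs \<subseteq> transp_set n \<and>
      plen n (lprod gs) = k \<and> pleq n (lprod gs) (long_cycle n)}"

definition tmin :: "(nat \<Rightarrow> nat) \<Rightarrow> nat" where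
  "tmin g = Min {x. g x \<noteq> x}"

definition Pmap :: "(nat \<Rightarrow> nat) list \<Rightarrow> nat list" where
  "Pmap gs = map tmin gs"

text \<open>Action of S_k on sequences (lists, positions 1..k stored at 0..k-1):
  pi.(x_1..x_k) = (x_{pi^-1(1)},...,x_{pi^-1(k)}).\<close>
definition seq_act :: "(nat \<Rightarrow> nat) \<Rightarrow> 'a list \<Rightarrow> 'a list" where
  "seq_act \<pi> xs = map (\<lambda>i. xs ! (inv \<pi> i - 1)) [1..<length xs + 1]"

text \<open>Hurwitz moves beta_l and beta_l^{-1} (l is 1-based).\<close>
definition beta :: "nat \<Rightarrow> (nat \<Rightarrow> nat) list \<Rightarrow> (nat \<Rightarrow> nat) list" where
  "beta l gs = gs[l - 1 := gs ! l, l := inv (gs ! l) \<circ> gs ! (l - 1) \<circ> gs ! l]"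

definition beta_inv :: "nat \<Rightarrow> (nat \<Rightarrow> nat) list \<Rightarrow> (nat \<Rightarrow> nat) list" where
  "beta_inv l gs = gs[l - 1 := gs ! (l - 1) \<circ> gs ! l \<circ> inv (gs ! (l - 1)), l := gs ! (l - 1)]"

definition sigma_op :: "nat \<Rightarrow> (nat \<Rightarrow> nat) list \<Rightarrow> (nat \<Rightarrow> nat) list" where
  "sigma_op l gs =
     (if tmin (gs ! (l - 1)) = tmin (gs ! l) then gs
      else if tmin (gs ! (l - 1)) < tmin (gs ! l) then beta l gs
      else beta_inv l gs)"

definition is_ext_action ::
  "nat \<Rightarrow> nat \<Rightarrow> ((nat \<Rightarrow> nat) \<Rightarrow> (nat \<Rightarrow> nat) list \<Rightarrow> (nat \<Rightarrow> nat) list) \<Rightarrow> bool" where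
  "is_ext_action n k act \<longleftrightarrow>
     (\<forall>\<pi> \<gamma>. \<pi> permutes {1..k} \<and> \<gamma> \<in> Sigma_nk n k \<longrightarrow> act \<pi> \<gamma> \<in> Sigma_nk n k) \<and>
     (\<forall>\<gamma> \<in> Sigma_nk n k. act id \<gamma> = \<gamma>) \<and>
     (\<forall>\<pi> \<rho> \<gamma>. \<pi> permutes {1..k} \<and> \<rho> permutes {1..k} \<and> \<gamma> \<in> Sigma_nk n k \<longrightarrow>
        act (\<pi> \<circ> \<rho>) \<gamma> = act \<pi> (act \<rho> \<gamma>)) \<and>
     (\<forall>l \<gamma>. 1 \<le> l \<and> l < k \<and> \<gamma> \<in> Sigma_nk n k \<longrightarrow>
        act (transpose l (l + 1)) \<gamma> = sigma_op l \<gamma>)"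

end

theory Submission
  imports Defs
begin



lemma lprod_Nil[simp]: "lprod [] = id" by (simp add: lprod_def)
lemma lprod_Cons[simp]: "lprod (g#gs) = g \<circ> lprod gs" by (simp add: lprod_def)
lemma lprod_append: "lprod (xs@ys) = lprod xs \<circ> lprod ys"
  by (induction xs) (auto simp: comp_assoc)

lemma transp_setE:
  assumes "g \<in> transp_set n"
  obtains i j where "g = transpose i j" "1 \<le> i" "i < j" "j \<le> n"
  using assms unfolding transp_set_def by blast

lemma transp_setI: "1 \<le> i \<Longrightarrow> i < j \<Longrightarrow> j \<le> n \<Longrightarrow> transpose i j \<in> transp_set n"
  unfolding transp_set_def by blast

lemma moved_transpose: "i \<noteq> j \<Longrightarrow> {x. transpose i j x \<noteq> x} = {i,j}"
  by (auto simp: transpose_def)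

lemma tmin_transpose: "i < j \<Longrightarrow> tmin (transpose i j) = i"
  unfolding tmin_def by (subst moved_transpose) auto

lemma transp_permutes: "g \<in> transp_set n \<Longrightarrow> g permutes {1..n}"
  by (erule transp_setE) (auto intro!: permutes_swap_id)

lemma lprod_permutes: "set gs \<subseteq> transp_set n \<Longrightarrow> lprod gs permutes {1..n}"
proof (induction gs)
  case (Cons a gs)
  then have "a permutes {1..n}" "lprod gs permutes {1..n}" using transp_permutes[of a n] by auto
  then show ?case unfolding lprod_Cons by (rule permutes_compose[rotated])
qed (simp add: permutes_id)

lemma transp_conj:
  assumes "g \<in> transp_set n" "h \<in> transp_set n"
  shows "h \<circ> g \<circ> h \<in> transp_set n"
proof -
  obtain i j where g: "g = transpose i j" "1 \<le> i" "i < j" "j \<le> n" using assms(1) by (rule transp_setE)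
  have hp: "h permutes {1..n}" using assms(2) by (rule transp_permutes)
  have hinv: "inv h = h" using assms(2) by (auto elim: transp_setE)
  have hh: "h \<circ> h = id" using assms(2) by (auto elim!: transp_setE)
  have bh: "bij h" using hp permutes_bij by blast
  have "transpose (h i) (h j) \<circ> h = h \<circ> transpose (inv h (h i)) (inv h (h j))"
    by (rule transpose_comp_eq[OF bh])
  then have "transpose (h i) (h j) \<circ> h = h \<circ> g" using g(1) hinv hh
    by (metis comp_apply id_apply)
  then have "transpose (h i) (h j) \<circ> h \<circ> h = h \<circ> g \<circ> h" by simp
  then have hgh: "h \<circ> g \<circ> h = transpose (h i) (h j)" using hh by (simp add: comp_assoc)
  have hin: "h i \<in> {1..n}" "h j \<in> {1..n}" 
    using g permutes_in_image[OF hp] by auto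
  have hne: "h i \<noteq> h j"
    using g permutes_inj[OF hp] by (auto dest: injD)
  show ?thesis
  proof (cases "h i < h j")
    case False
    then have "h j < h i" using \<open>h i \<noteq> h j\<close> by simp
    then show ?thesis using hgh hin by (auto intro!: transp_setI simp: transpose_commute[of "h i"])
  qed (use hgh hin in \<open>auto intro!: transp_setI\<close>)
qed




lemma orbit_of_self[simp]: "x \<in> orbit_of \<pi> x"
  unfolding orbit_of_def by (auto intro: exI[of _ 0])

lemma orbit_of_funpow: "(\<pi>^^m) x \<in> orbit_of \<pi> x"
  unfolding orbit_of_def by auto

lemma orbit_of_step: "y \<in> orbit_of \<pi> x \<Longrightarrow> \<pi> y \<in> orbit_of \<pi> x"
  unfolding orbit_of_def by (auto intro: exI[of _ "Suc m" for m])

lemma orbit_of_induct[consumes 1, case_names self step]: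
  assumes "y \<in> orbit_of \<pi> x" "P x" "\<And>z. z \<in> orbit_of \<pi> x \<Longrightarrow> P z \<Longrightarrow> P (\<pi> z)"
  shows "P y"
proof -
  obtain m where m: "y = (\<pi>^^m) x" using assms(1) unfolding orbit_of_def by auto
  have "P ((\<pi>^^m) x)"
    by (induction m) (use assms(2,3) orbit_of_funpow in auto)
  then show ?thesis using m by simp
qed

lemma orbit_of_trans:
  assumes "y \<in> orbit_of \<pi> x" "z \<in> orbit_of \<pi> y" shows "z \<in> orbit_of \<pi> x"
  using assms(2) by (induction rule: orbit_of_induct) (use assms(1) orbit_of_step in auto)

lemma orbit_of_perm: "permutation \<pi> \<Longrightarrow> orbit_of \<pi> x = orbit \<pi> x"
  using orbit_altdef_permutation[of \<pi> x] by (auto simp: orbit_of_def)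

lemma orbit_of_sym:
  assumes p: "permutation \<pi>" and y: "y \<in> orbit_of \<pi> x" shows "x \<in> orbit_of \<pi> y"
proof -
  have "x \<in> orbit \<pi> x" by (rule permutation_self_in_orbit[OF p])
  moreover have "y \<in> orbit \<pi> x" using y orbit_of_perm[OF p] by blast
  ultimately have "x \<in> orbit \<pi> y" by (rule orbit_swap)
  then show ?thesis using orbit_of_perm[OF p] by blast
qed

lemma orbit_of_eq:
  assumes p: "permutation \<pi>" and y: "y \<in> orbit_of \<pi> x" shows "orbit_of \<pi> y = orbit_of \<pi> x"
proof
  show "orbit_of \<pi> y \<subseteq> orbit_of \<pi> x" using orbit_of_trans[OF y] by blast
  have "x \<in> orbit_of \<pi> y" by (rule orbit_of_sym[OF p y])
  then show "orbit_of \<pi> x \<subseteq> orbit_of \<pi> y" using orbit_of_trans by blast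
qed

lemma orbit_of_finite: "permutation \<pi> \<Longrightarrow> finite (orbit_of \<pi> x)"
  using orbit_of_perm[of \<pi> x] finite_orbit[OF permutation_self_in_orbit] by simp

lemma orbit_of_sub:
  assumes "\<pi> permutes S" "x \<in> S" shows "orbit_of \<pi> x \<subseteq> S"
proof
  fix y assume "y \<in> orbit_of \<pi> x"
  then show "y \<in> S" by (induction rule: orbit_of_induct) (use assms permutes_in_image[OF assms(1)] in auto)
qed

lemma perm_n: "(\<pi>::nat\<Rightarrow>nat) permutes {1..n} \<Longrightarrow> permutation \<pi>"
  using permutes_imp_permutation[of "{1..n}" \<pi>] by simp

lemma ncycles_le: "ncycles n \<pi> \<le> n"
  unfolding ncycles_def using card_image_le[of "{1..n}" "orbit_of \<pi>"] by simp

lemma orbit_of_fixed: "\<pi> x = x \<Longrightarrow> orbit_of \<pi> x = {x}"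
proof -
  assume h: "\<pi> x = x"
  have "(\<pi>^^m) x = x" for m by (induction m) (use h in auto)
  then show ?thesis unfolding orbit_of_def by auto
qed

lemma ncycles_id: "ncycles n id = n"
proof -
  have e: "orbit_of id = (\<lambda>x. {x})"
    by (rule ext) (rule orbit_of_fixed, simp)
  have "inj_on (\<lambda>x::nat. {x}) {1..n}" by (rule inj_onI) simp
  then show ?thesis unfolding ncycles_def e by (simp add: card_image)
qed

lemma orbit_of_avoid:
  assumes "a \<notin> orbit_of \<pi> x" "b \<notin> orbit_of \<pi> x"
  shows "orbit_of (\<pi> \<circ> transpose a b) x = orbit_of \<pi> x"
proof -
  have eq: "((\<pi> \<circ> transpose a b)^^m) x = (\<pi>^^m) x" for m
  proof (induction m)
    case (Suc m)
    have "(\<pi>^^m) x \<in> orbit_of \<pi> x" by (rule orbit_of_funpow)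
    then have "(\<pi>^^m) x \<noteq> a" "(\<pi>^^m) x \<noteq> b" using assms by auto
    then have tf: "transpose a b ((\<pi>^^m) x) = (\<pi>^^m) x" by (rule transpose_apply_other)
    have "((\<pi> \<circ> transpose a b)^^Suc m) x = \<pi> (transpose a b (((\<pi> \<circ> transpose a b)^^m) x))" by simp
    also have "\<dots> = \<pi> (transpose a b ((\<pi>^^m) x))" by (simp only: Suc.IH)
    also have "\<dots> = (\<pi>^^Suc m) x" using tf by simp
    finally show ?case .
  qed simp
  show ?thesis unfolding orbit_of_def
  proof (intro Collect_cong iffI)
    fix y assume "\<exists>m. ((\<pi> \<circ> transpose a b)^^m) x = y"
    then obtain m where "((\<pi> \<circ> transpose a b)^^m) x = y" by blast
    then have "(\<pi>^^m) x = y" by (simp only: eq)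
    then show "\<exists>m. (\<pi>^^m) x = y" by blast
  next
    fix y assume "\<exists>m. (\<pi>^^m) x = y"
    then obtain m where "(\<pi>^^m) x = y" by blast
    then have "((\<pi> \<circ> transpose a b)^^m) x = y" by (simp only: eq)
    then show "\<exists>m. ((\<pi> \<circ> transpose a b)^^m) x = y" by blast
  qed
qed




lemma ncycles_lower:
  assumes p: "\<pi> permutes {1..n}" and ab: "a \<in> {1..n}" "b \<in> {1..n}"
  shows "ncycles n \<pi> \<le> ncycles n (\<pi> \<circ> transpose a b) + 1"
proof -
  let ?p = "\<pi> \<circ> transpose a b"
  let ?O = "orbit_of \<pi> ` {1..n}" and ?O' = "orbit_of ?p ` {1..n}"
  define A where "A = {X \<in> ?O. a \<notin> X \<and> b \<notin> X}"
  have pp: "permutation \<pi>" using p by (rule perm_n)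
  have AO': "A \<subseteq> ?O'"
    unfolding A_def using orbit_of_avoid by (auto intro!: image_eqI)
  have fA: "finite A" unfolding A_def by auto
  have "?O \<subseteq> A \<union> {orbit_of \<pi> a, orbit_of \<pi> b}"
    unfolding A_def using orbit_of_eq[OF pp] by blast
  then have "card ?O \<le> card (A \<union> {orbit_of \<pi> a, orbit_of \<pi> b})"
    using fA by (intro card_mono) auto
  also have "\<dots> \<le> card A + card {orbit_of \<pi> a, orbit_of \<pi> b}" by (rule card_Un_le)
  also have "\<dots> \<le> card A + 2" by (simp add: card_insert_le_m1)
  finally have c1: "card ?O \<le> card A + 2" .
  have "insert (orbit_of ?p a) A \<subseteq> ?O'" using AO' ab by auto
  moreover have "orbit_of ?p a \<notin> A" unfolding A_def by auto
  moreover have "finite A" using AO' finite_subset by blast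
  ultimately have "card A + 1 \<le> card ?O'"
  proof -
    assume a1: "insert (orbit_of ?p a) A \<subseteq> ?O'" and a2: "orbit_of ?p a \<notin> A" and a3: "finite A"
    have "card (insert (orbit_of ?p a) A) \<le> card ?O'" using a1 by (intro card_mono) auto
    then show ?thesis using a2 a3 by simp
  qed
  then show ?thesis using c1 unfolding ncycles_def by linarith
qed

lemma ncycles_upper:
  assumes p: "\<pi> permutes {1..n}" and ab: "a \<in> {1..n}" "b \<in> {1..n}"
  shows "ncycles n (\<pi> \<circ> transpose a b) \<le> ncycles n \<pi> + 1"
proof -
  have "(\<pi> \<circ> transpose a b) permutes {1..n}"
    using p ab by (metis permutes_compose permutes_swap_id)
  from ncycles_lower[OF this ab] show ?thesis by (simp add: comp_assoc)
qed

lemma ncycles_merge: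
  assumes p: "\<pi> permutes {1..n}" and ab: "a \<in> {1..n}" "b \<in> {1..n}"
    and nb: "b \<notin> orbit_of \<pi> a"
  shows "ncycles n (\<pi> \<circ> transpose a b) + 1 \<le> ncycles n \<pi>"
proof -
  let ?p = "\<pi> \<circ> transpose a b"
  let ?O = "orbit_of \<pi> ` {1..n}" and ?O' = "orbit_of ?p ` {1..n}"
  define A where "A = {X \<in> ?O. a \<notin> X \<and> b \<notin> X}"
  have pp: "permutation \<pi>" using p by (rule perm_n)
  have pp': "permutation ?p" using p ab by (metis permutes_compose permutes_swap_id perm_n)
  have na: "a \<notin> orbit_of \<pi> b" using nb orbit_of_sym[OF pp] by blast
  have ab_ne: "a \<noteq> b" using nb by auto
  have s1: "z \<in> orbit_of ?p a" if "z \<in> orbit_of \<pi> (\<pi> b)" for z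
    using that
  proof (induction z rule: orbit_of_induct)
    case self
    have "\<pi> b = ?p a" by simp
    then show ?case by (metis orbit_of_self orbit_of_step)
  next
    case (step z)
    have "z \<in> orbit_of \<pi> b" using step(1) orbit_of_trans orbit_of_step orbit_of_self by metis
    then have "z \<noteq> a" using na by auto
    show ?case
    proof (cases "z = b")
      case True
      have "\<pi> b = ?p a" by simp
      then show ?thesis using True by (metis orbit_of_self orbit_of_step)
    next
      case False
      then have "\<pi> z = ?p z" using \<open>z \<noteq> a\<close> by simp
      then show ?thesis using step(2) orbit_of_step by metis
    qed
  qed
  have ob: "orbit_of \<pi> b \<subseteq> orbit_of ?p a"
    using s1 orbit_of_eq[OF pp, of "\<pi> b" b] orbit_of_step[OF orbit_of_self] by blast
  have oa: "orbit_of \<pi> a \<subseteq> orbit_of ?p a"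
  proof
    fix z assume "z \<in> orbit_of \<pi> a"
    then show "z \<in> orbit_of ?p a"
    proof (induction z rule: orbit_of_induct)
      case (step z)
      then have "z \<noteq> b" using nb by auto
      show ?case
      proof (cases "z = a")
        case True
        have "\<pi> a = ?p b" using ab_ne by simp
        moreover have "b \<in> orbit_of ?p a" using ob by auto
        ultimately show ?thesis using True orbit_of_step by metis
      next
        case False
        then have "\<pi> z = ?p z" using \<open>z \<noteq> b\<close> by simp
        then show ?thesis using step(2) orbit_of_step by metis
      qed
    qed simp
  qed
  have "?O' \<subseteq> insert (orbit_of ?p a) A"
  proof
    fix X assume "X \<in> ?O'"
    then obtain y where y: "y \<in> {1..n}" "X = orbit_of ?p y" by auto
    show "X \<in> insert (orbit_of ?p a) A"
    proof (cases "a \<in> orbit_of \<pi> y \<or> b \<in> orbit_of \<pi> y")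
      case True
      then have "y \<in> orbit_of \<pi> a \<or> y \<in> orbit_of \<pi> b" using orbit_of_sym[OF pp] by blast
      then have "y \<in> orbit_of ?p a" using oa ob by blast
      then show ?thesis using y orbit_of_eq[OF pp'] by blast
    next
      case False
      then show ?thesis using y orbit_of_avoid unfolding A_def by auto
    qed
  qed
  moreover have "finite A" unfolding A_def by auto
  ultimately have c1: "card ?O' \<le> card A + 1"
  proof -
    assume a1: "?O' \<subseteq> insert (orbit_of ?p a) A" and a3: "finite A"
    have "card ?O' \<le> card (insert (orbit_of ?p a) A)" using a1 a3 by (intro card_mono) auto
    also have "\<dots> \<le> card A + 1" using a3 by (simp add: card_insert_if)
    finally show ?thesis .
  qed
  have new: "orbit_of \<pi> a \<notin> A" "orbit_of \<pi> b \<notin> A" "orbit_of \<pi> a \<noteq> orbit_of \<pi> b"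
    unfolding A_def using nb by auto
  have "insert (orbit_of \<pi> a) (insert (orbit_of \<pi> b) A) \<subseteq> ?O" using ab unfolding A_def by auto
  then have "card (insert (orbit_of \<pi> a) (insert (orbit_of \<pi> b) A)) \<le> card ?O"
    by (intro card_mono) auto
  moreover have "card (insert (orbit_of \<pi> a) (insert (orbit_of \<pi> b) A)) = card A + 2"
    using new \<open>finite A\<close> by simp
  ultimately show ?thesis using c1 unfolding ncycles_def by linarith
qed

lemma ncycles_split_fix:
  assumes p: "\<pi> permutes {1..n}" and x: "x \<in> {1..n}" and nx: "\<pi> x \<noteq> x"
  shows "ncycles n \<pi> + 1 \<le> ncycles n (\<pi> \<circ> transpose x (\<pi> x))"
proof -
  let ?p = "\<pi> \<circ> transpose x (\<pi> x)"
  let ?O = "orbit_of \<pi> ` {1..n}" and ?O' = "orbit_of ?p ` {1..n}"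
  define A where "A = {X \<in> ?O. x \<notin> X}"
  have pp: "permutation \<pi>" using p by (rule perm_n)
  have px: "\<pi> x \<in> {1..n}" using permutes_in_image[OF p] x by simp
  have AO': "A \<subseteq> ?O'"
  proof
    fix X assume "X \<in> A"
    then obtain y where y: "y \<in> {1..n}" "X = orbit_of \<pi> y" "x \<notin> X" unfolding A_def by auto
    have "\<pi> x \<notin> X"
    proof
      assume h: "\<pi> x \<in> X"
      have "x \<in> orbit_of \<pi> (\<pi> x)" by (rule orbit_of_sym[OF pp orbit_of_step[OF orbit_of_self]])
      then have "x \<in> orbit_of \<pi> y" using h y(2) orbit_of_trans by metis
      then show False using y by simp
    qed
    then show "X \<in> ?O'" using y orbit_of_avoid[of x \<pi> y "\<pi> x"] by auto
  qed
  have "?O \<subseteq> insert (orbit_of \<pi> x) A"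
    unfolding A_def using orbit_of_eq[OF pp] by blast
  moreover have "finite A" unfolding A_def by auto
  ultimately have c1: "card ?O \<le> card A + 1"
  proof -
    assume a1: "?O \<subseteq> insert (orbit_of \<pi> x) A" and a3: "finite A"
    have "card ?O \<le> card (insert (orbit_of \<pi> x) A)" using a1 a3 by (intro card_mono) auto
    also have "\<dots> \<le> card A + 1" using a3 by (simp add: card_insert_if)
    finally show ?thesis .
  qed
  have fixp: "?p (\<pi> x) = \<pi> x" by simp
  have o2: "orbit_of ?p (\<pi> x) = {\<pi> x}" using fixp by (rule orbit_of_fixed)
  have new: "orbit_of ?p x \<notin> A" "{\<pi> x} \<notin> A" "orbit_of ?p x \<noteq> {\<pi> x}"
  proof -
    show "orbit_of ?p x \<notin> A" unfolding A_def by auto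
    have "\<pi> x \<in> orbit_of \<pi> x" by (rule orbit_of_step[OF orbit_of_self])
    have xx: "x \<in> orbit_of \<pi> (\<pi> x)" by (rule orbit_of_sym[OF pp orbit_of_step[OF orbit_of_self]])
    have xX: "x \<in> X" if XO: "X \<in> ?O" and pX: "\<pi> x \<in> X" for X
    proof -
      obtain y where Xy: "X = orbit_of \<pi> y" using XO by blast
      then have "\<pi> x \<in> orbit_of \<pi> y" using pX by simp
      then have "x \<in> orbit_of \<pi> y" using xx by (rule orbit_of_trans)
      then show ?thesis using Xy by simp
    qed
    show "{\<pi> x} \<notin> A"
    proof
      assume "{\<pi> x} \<in> A"
      then have "{\<pi> x} \<in> ?O" unfolding A_def by blast
      then have "x \<in> {\<pi> x}" using xX by blast
      then show False using nx by simp
    qed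
    show "orbit_of ?p x \<noteq> {\<pi> x}"
    proof
      assume "orbit_of ?p x = {\<pi> x}"
      then have "x \<in> {\<pi> x}" using orbit_of_self[of x ?p] by simp
      then show False using nx by simp
    qed
  qed
  have "orbit_of ?p x \<in> ?O'" using x by blast
  moreover have "{\<pi> x} \<in> ?O'" using px o2 by (metis imageI)
  ultimately have "insert (orbit_of ?p x) (insert {\<pi> x} A) \<subseteq> ?O'"
    using AO' by blast
  then have "card (insert (orbit_of ?p x) (insert {\<pi> x} A)) \<le> card ?O'"
    by (intro card_mono) auto
  moreover have "card (insert (orbit_of ?p x) (insert {\<pi> x} A)) = card A + 2"
    using new \<open>finite A\<close> by simp
  ultimately show ?thesis using c1 unfolding ncycles_def by linarith
qed




definition nxt :: "nat set \<Rightarrow> nat \<Rightarrow> nat" where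
  "nxt S x = (if \<exists>y\<in>S. x < y then Min {y\<in>S. x < y} else Min S)"

definition incr :: "(nat \<Rightarrow> nat) \<Rightarrow> bool" where
  "incr \<pi> \<longleftrightarrow> (\<forall>x. \<pi> x = nxt (orbit_of \<pi> x) x)"

lemma nxt_up:
  assumes "finite S" "z \<in> S" "x < z" "\<forall>w\<in>S. x < w \<longrightarrow> z \<le> w"
  shows "nxt S x = z"
proof -
  have "Min {y\<in>S. x < y} = z"
    using assms by (intro Min_eqI) auto
  then show ?thesis using assms unfolding nxt_def by auto
qed

lemma nxt_wrap:
  assumes "\<forall>w\<in>S. w \<le> x" shows "nxt S x = Min S"
  using assms unfolding nxt_def by (auto simp: not_less)

lemma nxt_cases:
  assumes "finite S" "S \<noteq> {}"
  shows "(nxt S x \<in> S \<and> x < nxt S x \<and> (\<forall>w\<in>S. x < w \<longrightarrow> nxt S x \<le> w)) \<or>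
         ((\<forall>w\<in>S. w \<le> x) \<and> nxt S x = Min S)"
proof (cases "\<exists>y\<in>S. x < y")
  case True
  let ?T = "{y\<in>S. x < y}"
  have T: "finite ?T" "?T \<noteq> {}" using assms True by auto
  have "nxt S x = Min ?T" using True unfolding nxt_def by simp
  moreover have "Min ?T \<in> ?T" using Min_in[OF T] .
  moreover have "\<forall>w\<in>S. x < w \<longrightarrow> Min ?T \<le> w" using T by auto
  ultimately show ?thesis by auto
next
  case False
  then show ?thesis by (auto simp: nxt_wrap not_less)
qed

lemma nxt_in: assumes "finite S" "S \<noteq> {}" shows "nxt S x \<in> S"
  using nxt_cases[OF assms, of x] Min_in[OF assms] by metis

lemma cyc_reach:
  assumes fin: "finite S" and u: "u \<in> S" and f: "\<forall>y\<in>S. f y = nxt S y"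
  shows "y \<in> S \<Longrightarrow> u \<le> y \<Longrightarrow> y \<in> orbit_of f u"
proof (induction y rule: less_induct)
  case (less y)
  show ?case
  proof (cases "y = u")
    case True then show ?thesis by simp
  next
    case False
    then have uy: "u < y" using less.prems by simp
    let ?T = "{w\<in>S. w < y}"
    have T: "finite ?T" "?T \<noteq> {}" using fin u uy by auto
    define z where "z = Max ?T"
    have zT: "z \<in> ?T" unfolding z_def using Max_in[OF T] .
    have uz: "u \<le> z" unfolding z_def using T u uy by (intro Max_ge) auto
    have zmax: "\<forall>w\<in>S. w < y \<longrightarrow> w \<le> z" unfolding z_def using T by auto
    have zo: "z \<in> orbit_of f u" using less.IH[of z] zT uz by simp
    have fz: "f z = y"
    proof -
      have zy: "z < y" using zT by simp
      have "\<forall>w\<in>S. z < w \<longrightarrow> y \<le> w"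
      proof (intro ballI impI)
        fix w assume "w \<in> S" "z < w"
        then show "y \<le> w" using zmax by (meson not_le)
      qed
      then have "nxt S z = y" using fin less.prems(1) zy by (intro nxt_up)
      then show ?thesis using f zT by simp
    qed
    show ?thesis using orbit_of_step[OF zo] fz by simp
  qed
qed

lemma cyc_orbit:
  assumes fin: "finite S" and x: "x \<in> S" and f: "\<forall>y\<in>S. f y = nxt S y"
  shows "orbit_of f x = S"
proof
  show "orbit_of f x \<subseteq> S"
  proof
    fix y assume "y \<in> orbit_of f x"
    then show "y \<in> S"
    proof (induction rule: orbit_of_induct)
      case (step z)
      then show ?case using f nxt_in[OF fin] x by auto
    qed (rule x)
  qed
  show "S \<subseteq> orbit_of f x"
  proof
    fix y assume y: "y \<in> S"
    show "y \<in> orbit_of f x"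
    proof (cases "x \<le> y")
      case True then show ?thesis using cyc_reach[OF fin x f y] by simp
    next
      case False
      have ne: "S \<noteq> {}" using x by auto
      have M: "Max S \<in> S" "x \<le> Max S" using Max_in[OF fin ne] Max_ge[OF fin x] by auto
      have mo: "Max S \<in> orbit_of f x" using cyc_reach[OF fin x f M] .
      have "\<forall>w\<in>S. w \<le> Max S" using Max_ge[OF fin] by blast
      then have "nxt S (Max S) = Min S" by (rule nxt_wrap)
      then have fm: "f (Max S) = Min S" using f M(1) by simp
      have m: "Min S \<in> orbit_of f x" using orbit_of_step[OF mo] fm by simp
      have "y \<in> orbit_of f (Min S)"
        using cyc_reach[OF fin Min_in[OF fin ne] f y] Min_le[OF fin y] by simp
      then show ?thesis using m by (rule orbit_of_trans[rotated])
    qed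
  qed
qed




lemma incr_orbit_nxt:
  assumes p: "permutation \<pi>" and inc: "incr \<pi>" and y: "y \<in> orbit_of \<pi> a"
  shows "\<pi> y = nxt (orbit_of \<pi> a) y"
proof -
  have "orbit_of \<pi> y = orbit_of \<pi> a" using orbit_of_eq[OF p y] .
  then show ?thesis using inc unfolding incr_def by metis
qed

lemma Min_sub_eq:
  assumes "finite C" "C1 \<subseteq> C" "Min C \<in> C1"
  shows "Min C1 = Min C"
proof -
  have "finite C1" using assms finite_subset by blast
  then show ?thesis using assms by (intro Min_eqI) auto
qed

lemma incr_split:
  fixes \<pi> :: "nat \<Rightarrow> nat"
  assumes p: "\<pi> permutes {1..n}" and inc: "incr \<pi>" and ab: "1 \<le> a" "a < b" "b \<le> n"
    and bC: "b \<in> orbit_of \<pi> a"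
  shows "incr (\<pi> \<circ> transpose a b) \<and>
         orbit_of (\<pi> \<circ> transpose a b) a = orbit_of \<pi> a - {a<..b} \<and>
         orbit_of (\<pi> \<circ> transpose a b) b = orbit_of \<pi> a \<inter> {a<..b} \<and>
         (\<forall>y. y \<notin> orbit_of \<pi> a \<longrightarrow> orbit_of (\<pi> \<circ> transpose a b) y = orbit_of \<pi> y)"
proof -
  define C where "C = orbit_of \<pi> a"
  define C1 where "C1 = C - {a<..b}"
  define C2 where "C2 = C \<inter> {a<..b}"
  define \<pi>' where "\<pi>' = \<pi> \<circ> transpose a b"
  have pp: "permutation \<pi>" using p by (rule perm_n)
  have fC: "finite C" unfolding C_def by (rule orbit_of_finite[OF pp])
  have aC: "a \<in> C" unfolding C_def by simp
  have bC': "b \<in> C" using bC unfolding C_def .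
  have nC: "\<And>y. y \<in> C \<Longrightarrow> \<pi> y = nxt C y"
    unfolding C_def by (rule incr_orbit_nxt[OF pp inc])
  have neC: "C \<noteq> {}" using aC by auto
  have fC1: "finite C1" "finite C2" using fC unfolding C1_def C2_def by auto
  have aC1: "a \<in> C1" unfolding C1_def using aC by simp
  have bC2: "b \<in> C2" unfolding C2_def using bC' ab by simp
  have C1sub: "C1 \<subseteq> C" and C2sub: "C2 \<subseteq> C" unfolding C1_def C2_def by auto
  have MinC1: "Min C1 = Min C"
  proof (rule Min_sub_eq[OF fC C1sub])
    have "Min C \<le> a" using Min_le[OF fC aC] .
    then show "Min C \<in> C1" unfolding C1_def using Min_in[OF fC neC] by simp
  qed
  have i1: "\<pi>' y = nxt C1 y" if yC1: "y \<in> C1" for y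
  proof (cases "y = a")
    case True
    have "\<pi>' y = \<pi> b" unfolding \<pi>'_def using True by simp
    also have "\<dots> = nxt C b" using nC[OF bC'] .
    also have "\<dots> = nxt C1 a"
    proof -
      from nxt_cases[OF fC neC, of b] show ?thesis
      proof
        assume h: "nxt C b \<in> C \<and> b < nxt C b \<and> (\<forall>w\<in>C. b < w \<longrightarrow> nxt C b \<le> w)"
        show ?thesis
        proof (rule nxt_up[OF fC1(1), symmetric])
          show "nxt C b \<in> C1" unfolding C1_def using h by simp
          show "a < nxt C b" using h ab by simp
          show "\<forall>w\<in>C1. a < w \<longrightarrow> nxt C b \<le> w" unfolding C1_def using h by auto
        qed
      next
        assume h: "(\<forall>w\<in>C. w \<le> b) \<and> nxt C b = Min C"
        have "\<forall>w\<in>C1. w \<le> a" unfolding C1_def using h by auto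
        then have "nxt C1 a = Min C1" by (rule nxt_wrap)
        then show ?thesis using h MinC1 by simp
      qed
    qed
    finally show ?thesis using True by simp
  next
    case False
    have yC: "y \<in> C" and ny: "\<not> (a < y \<and> y \<le> b)" using yC1 unfolding C1_def by auto
    have yb: "y \<noteq> b" using ny ab by auto
    have "\<pi>' y = \<pi> y" unfolding \<pi>'_def using False yb by simp
    also have "\<dots> = nxt C y" using nC[OF yC] .
    also have "\<dots> = nxt C1 y"
    proof -
      from nxt_cases[OF fC neC, of y] show ?thesis
      proof
        assume h: "nxt C y \<in> C \<and> y < nxt C y \<and> (\<forall>w\<in>C. y < w \<longrightarrow> nxt C y \<le> w)"
        have "nxt C y \<in> C1"
        proof (cases "y < a")
          case True
          then have "nxt C y \<le> a" using h aC by auto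
          then show ?thesis unfolding C1_def using h by simp
        next
          case False
          then have "b < y" using ny False \<open>y \<noteq> a\<close> by auto
          then show ?thesis unfolding C1_def using h by simp
        qed
        then show ?thesis using h C1sub by (intro nxt_up[OF fC1(1), symmetric]) auto
      next
        assume h: "(\<forall>w\<in>C. w \<le> y) \<and> nxt C y = Min C"
        have "\<forall>w\<in>C1. w \<le> y" using h C1sub by auto
        then have "nxt C1 y = Min C1" by (rule nxt_wrap)
        then show ?thesis using h MinC1 by simp
      qed
    qed
    finally show ?thesis .
  qed
  have i2: "\<pi>' y = nxt C2 y" if yC2: "y \<in> C2" for y
  proof -
    have yC: "y \<in> C" and ay: "a < y" and yb: "y \<le> b" using yC2 unfolding C2_def by auto
    have za: "nxt C u \<in> C \<and> u < nxt C u \<and> (\<forall>w\<in>C. u < w \<longrightarrow> nxt C u \<le> w)" if "u < b" for u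
      using nxt_cases[OF fC neC, of u] bC' that by auto
    show ?thesis
    proof (cases "y = b")
      case True
      have "\<pi>' y = \<pi> a" unfolding \<pi>'_def using True by simp
      also have "\<dots> = nxt C a" using nC[OF aC] .
      also have "\<dots> = nxt C2 b"
      proof -
        have h: "nxt C a \<in> C \<and> a < nxt C a \<and> (\<forall>w\<in>C. a < w \<longrightarrow> nxt C a \<le> w)"
          using za ab by simp
        have "nxt C a \<le> b" using h bC' ab by auto
        then have inC2: "nxt C a \<in> C2" unfolding C2_def using h by simp
        have "\<forall>w\<in>C2. w \<le> b" unfolding C2_def by auto
        then have "nxt C2 b = Min C2" by (rule nxt_wrap)
        also have "Min C2 = nxt C a"
          using fC1(2) inC2 h unfolding C2_def by (intro Min_eqI) auto
        finally show ?thesis by simp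
      qed
      finally show ?thesis using True by simp
    next
      case False
      then have yb': "y < b" using yb by simp
      have ya: "y \<noteq> a" using ay by simp
      have "\<pi>' y = \<pi> y" unfolding \<pi>'_def using False ya by simp
      also have "\<dots> = nxt C y" using nC[OF yC] .
      also have "\<dots> = nxt C2 y"
      proof -
        have h: "nxt C y \<in> C \<and> y < nxt C y \<and> (\<forall>w\<in>C. y < w \<longrightarrow> nxt C y \<le> w)"
          using za yb' by simp
        have "nxt C y \<le> b" using h bC' yb' by auto
        then have inC2: "nxt C y \<in> C2" unfolding C2_def using h ay by simp
        show ?thesis using h inC2 C2sub by (intro nxt_up[OF fC1(2), symmetric]) auto
      qed
      finally show ?thesis .
    qed
  qed
  have o1: "orbit_of \<pi>' y = C1" if "y \<in> C1" for y
    using cyc_orbit[OF fC1(1) that] i1 by blast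
  have o2: "orbit_of \<pi>' y = C2" if "y \<in> C2" for y
    using cyc_orbit[OF fC1(2) that] i2 by blast
  have o3: "orbit_of \<pi>' y = orbit_of \<pi> y" if "y \<notin> C" for y
  proof -
    have "a \<notin> orbit_of \<pi> y" "b \<notin> orbit_of \<pi> y"
      using that orbit_of_sym[OF pp] bC' unfolding C_def
      by (blast, metis orbit_of_trans)
    then show ?thesis unfolding \<pi>'_def by (rule orbit_of_avoid)
  qed
  have "incr \<pi>'"
    unfolding incr_def
  proof
    fix y
    show "\<pi>' y = nxt (orbit_of \<pi>' y) y"
    proof (cases "y \<in> C")
      case True
      then have "y \<in> C1 \<or> y \<in> C2" unfolding C1_def C2_def by auto
      then show ?thesis using i1 i2 o1 o2 by auto
    next
      case False
      then have "y \<noteq> a" "y \<noteq> b" using aC bC' by auto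
      then have "\<pi>' y = \<pi> y" unfolding \<pi>'_def by simp
      also have "\<dots> = nxt (orbit_of \<pi> y) y" using inc unfolding incr_def by simp
      finally show ?thesis using o3[OF False] by simp
    qed
  qed
  then show ?thesis using o1[OF aC1] o2[OF bC2] o3 unfolding \<pi>'_def C1_def C2_def C_def by simp
qed




lemma lc_out: "1 \<le> n \<Longrightarrow> y \<notin> {1..n} \<Longrightarrow> long_cycle n y = y"
  unfolding long_cycle_def by auto

lemma lc_nxt:
  assumes "y \<in> {1..n}" shows "long_cycle n y = nxt {1..n} y"
proof (cases "y < n")
  case True
  have "nxt {1..n} y = y + 1" using True assms by (intro nxt_up) auto
  then show ?thesis using True assms unfolding long_cycle_def by simp
next
  case False
  then have yn: "y = n" using assms by simp
  have "\<forall>w\<in>{1..n}. w \<le> y" using yn by simp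
  then have "nxt {1..n} y = Min {1..n}" by (rule nxt_wrap)
  also have "\<dots> = 1" using assms by (intro Min_eqI) auto
  finally show ?thesis using yn assms unfolding long_cycle_def by simp
qed

lemma lc_orbit: "x \<in> {1..n} \<Longrightarrow> orbit_of (long_cycle n) x = {1..n}"
  by (rule cyc_orbit) (auto simp: lc_nxt)

lemma lc_incr: assumes n: "1 \<le> n" shows "incr (long_cycle n)"
  unfolding incr_def
proof
  fix x
  show "long_cycle n x = nxt (orbit_of (long_cycle n) x) x"
  proof (cases "x \<in> {1..n}")
    case True then show ?thesis by (simp add: lc_orbit lc_nxt)
  next
    case False
    then have f: "long_cycle n x = x" by (rule lc_out[OF n])
    then have "orbit_of (long_cycle n) x = {x}" by (rule orbit_of_fixed)
    moreover have "nxt {x} x = x" by (simp add: nxt_wrap)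
    ultimately show ?thesis using f by simp
  qed
qed

lemma lc_ncycles: "1 \<le> n \<Longrightarrow> ncycles n (long_cycle n) = 1"
proof -
  assume n: "1 \<le> n"
  have "orbit_of (long_cycle n) ` {1..n} = {{1..n}}"
    using n lc_orbit by auto
  then show ?thesis unfolding ncycles_def by simp
qed

lemma lc_permutes: assumes n: "1 \<le> n" shows "long_cycle n permutes {1..n}"
proof (rule inj_imp_permutes)
  show "inj_on (long_cycle n) {1..n}"
    by (rule inj_onI) (auto simp: long_cycle_def split: if_splits)
  show "\<And>x. x \<in> {1..n} \<Longrightarrow> long_cycle n x \<in> {1..n}"
    by (auto simp: long_cycle_def)
  show "\<And>x. x \<notin> {1..n} \<Longrightarrow> long_cycle n x = x" by (rule lc_out[OF n])
qed simp

lemma lprod_snoc: "lprod (xs @ [x]) = lprod xs \<circ> x"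
  by (simp add: lprod_append)

lemma ncycles_lprod_lower:
  "set ts \<subseteq> transp_set n \<Longrightarrow> n \<le> ncycles n (lprod ts) + length ts"
proof (induction ts rule: rev_induct)
  case Nil then show ?case unfolding lprod_Nil list.size(3) using ncycles_id[of n] by linarith
next
  case (snoc t ts)
  then have ts: "set ts \<subseteq> transp_set n" and t: "t \<in> transp_set n" by auto
  obtain i j where t': "t = transpose i j" "1 \<le> i" "i < j" "j \<le> n" using t by (rule transp_setE)
  have "ncycles n (lprod ts) \<le> ncycles n (lprod ts \<circ> transpose i j) + 1"
    using t' by (intro ncycles_lower[OF lprod_permutes[OF ts]]) auto
  then show ?case using snoc.IH[OF ts] unfolding lprod_snoc t'(1) length_append_singleton by linarith
qed

lemma ncycles_comp_upper:
  "\<pi> permutes {1..n} \<Longrightarrow> set us \<subseteq> transp_set n \<Longrightarrow>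
   ncycles n (\<pi> \<circ> lprod us) \<le> ncycles n \<pi> + length us"
proof (induction us arbitrary: \<pi>)
  case Nil then show ?case by simp
next
  case (Cons t us)
  obtain i j where t': "t = transpose i j" "1 \<le> i" "i < j" "j \<le> n"
    using Cons.prems(2) by (auto elim: transp_setE)
  have pt: "(\<pi> \<circ> t) permutes {1..n}"
    using Cons.prems(1) t' permutes_compose permutes_swap_id by (metis atLeastAtMost_iff order.strict_trans1 le_less)
  have "ncycles n (\<pi> \<circ> lprod (t # us)) = ncycles n ((\<pi> \<circ> t) \<circ> lprod us)" by (simp add: comp_assoc)
  also have "\<dots> \<le> ncycles n (\<pi> \<circ> t) + length us"
  proof -
    have "set us \<subseteq> transp_set n" using Cons.prems(2) by simp
    from Cons.IH[OF pt this] show ?thesis .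
  qed
  also have "ncycles n (\<pi> \<circ> t) \<le> ncycles n \<pi> + 1"
    unfolding t'(1) using t' by (intro ncycles_upper[OF Cons.prems(1)]) auto
  finally have "ncycles n (\<pi> \<circ> lprod (t # us)) \<le> ncycles n \<pi> + 1 + length us" by linarith
  then show ?case unfolding length_Cons by linarith
qed




lemma transp_comp_permutes:
  assumes "\<pi> permutes {1..n}" "t \<in> transp_set n"
  shows "(\<pi> \<circ> t) permutes {1..n}"
  using permutes_compose[OF transp_permutes[OF assms(2)] assms(1)] .

lemma chain_incr:
  "\<pi> permutes {1..n} \<Longrightarrow> incr \<pi> \<Longrightarrow> set us \<subseteq> transp_set n \<Longrightarrow>
   ncycles n (\<pi> \<circ> lprod us) = ncycles n \<pi> + length us \<Longrightarrow> incr (\<pi> \<circ> lprod us)"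
proof (induction us arbitrary: \<pi>)
  case Nil then show ?case by simp
next
  case (Cons t us)
  have t: "t \<in> transp_set n" and us: "set us \<subseteq> transp_set n" using Cons.prems(3) by auto
  obtain i j where t': "t = transpose i j" "1 \<le> i" "i < j" "j \<le> n" using t by (rule transp_setE)
  have pt: "(\<pi> \<circ> t) permutes {1..n}" by (rule transp_comp_permutes[OF Cons.prems(1) t])
  have e: "\<pi> \<circ> lprod (t # us) = (\<pi> \<circ> t) \<circ> lprod us" by (simp add: comp_assoc)
  have u1: "ncycles n ((\<pi> \<circ> t) \<circ> lprod us) \<le> ncycles n (\<pi> \<circ> t) + length us"
    by (rule ncycles_comp_upper[OF pt us])
  have u2: "ncycles n (\<pi> \<circ> t) \<le> ncycles n \<pi> + 1"
    unfolding t'(1) using t' by (intro ncycles_upper[OF Cons.prems(1)]) auto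
  have c: "ncycles n (\<pi> \<circ> t) = ncycles n \<pi> + 1"
    using u1 u2 Cons.prems(4) unfolding e length_Cons by linarith
  have jo: "j \<in> orbit_of \<pi> i"
  proof (rule ccontr)
    assume "j \<notin> orbit_of \<pi> i"
    then have "ncycles n (\<pi> \<circ> transpose i j) + 1 \<le> ncycles n \<pi>"
      using t' by (intro ncycles_merge[OF Cons.prems(1)]) auto
    then show False using c t'(1) by simp
  qed
  have "incr (\<pi> \<circ> t)" unfolding t'(1)
    using incr_split[OF Cons.prems(1) Cons.prems(2) t'(2,3,4) jo] by blast
  moreover have "ncycles n ((\<pi> \<circ> t) \<circ> lprod us) = ncycles n (\<pi> \<circ> t) + length us"
    using c Cons.prems(4) unfolding e length_Cons by linarith
  ultimately have "incr ((\<pi> \<circ> t) \<circ> lprod us)" using Cons.IH[OF pt _ us] by blast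
  then show ?case unfolding e .
qed

lemma perm_decomp:
  "\<pi> permutes {1..n} \<Longrightarrow> m = n - ncycles n \<pi> \<Longrightarrow>
   \<exists>ts. set ts \<subseteq> transp_set n \<and> length ts = m \<and> lprod ts = \<pi>"
proof (induction m arbitrary: \<pi>)
  case 0
  show ?case
  proof (cases "\<forall>x. \<pi> x = x")
    case True
    then have "\<pi> = id" by auto
    then show ?thesis by (intro exI[of _ "[]"]) simp
  next
    case False
    then obtain x where nx: "\<pi> x \<noteq> x" by blast
    then have x: "x \<in> {1..n}" using "0.prems"(1) by (meson permutes_not_in)
    have "ncycles n \<pi> + 1 \<le> ncycles n (\<pi> \<circ> transpose x (\<pi> x))"
      by (rule ncycles_split_fix[OF "0.prems"(1) x nx])
    then show ?thesis using ncycles_le[of n "\<pi> \<circ> transpose x (\<pi> x)"] "0.prems"(2) ncycles_le[of n \<pi>] by linarith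
  qed
next
  case (Suc m)
  have p: "\<pi> permutes {1..n}" by (rule Suc.prems(1))
  have "\<exists>x. \<pi> x \<noteq> x"
  proof (rule ccontr)
    assume "\<not> ?thesis"
    then have "\<pi> = id" by auto
    then have "ncycles n \<pi> = n" using ncycles_id[of n] by (simp only:)
    then show False using Suc.prems(2) by linarith
  qed
  then obtain x where nx: "\<pi> x \<noteq> x" by blast
  then have x: "x \<in> {1..n}" using p by (meson permutes_not_in)
  have px: "\<pi> x \<in> {1..n}" using permutes_in_image[OF p] x by simp
  define t where "t = transpose x (\<pi> x)"
  have pt: "(\<pi> \<circ> t) permutes {1..n}" unfolding t_def
    using permutes_compose[OF permutes_swap_id[OF x px] p] .
  have l: "ncycles n \<pi> + 1 \<le> ncycles n (\<pi> \<circ> t)"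
    unfolding t_def by (rule ncycles_split_fix[OF p x nx])
  have u: "ncycles n (\<pi> \<circ> t) \<le> ncycles n \<pi> + 1"
    unfolding t_def by (rule ncycles_upper[OF p x px])
  have "m = n - ncycles n (\<pi> \<circ> t)" using l u Suc.prems(2) by linarith
  from Suc.IH[OF pt this] obtain ts where ts: "set ts \<subseteq> transp_set n" "length ts = m" "lprod ts = \<pi> \<circ> t"
    by blast
  have tT: "t \<in> transp_set n"
  proof (cases "x < \<pi> x")
    case True then show ?thesis unfolding t_def using x px by (intro transp_setI) auto
  next
    case False
    then have "\<pi> x < x" using nx by simp
    then have "transpose (\<pi> x) x \<in> transp_set n" using x px by (intro transp_setI) auto
    then show ?thesis unfolding t_def by (simp add: transpose_commute)
  qed
  have "lprod (ts @ [t]) = \<pi> \<circ> t \<circ> t" using ts(3) by (simp add: lprod_snoc)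
  also have "\<dots> = \<pi>" unfolding t_def by (simp add: comp_assoc)
  finally show ?case using ts tT by (intro exI[of _ "ts @ [t]"]) auto
qed

lemma inv_lprod: "set ts \<subseteq> transp_set n \<Longrightarrow> inv (lprod ts) = lprod (rev ts)"
proof (induction ts)
  case Nil then show ?case by simp
next
  case (Cons t ts)
  have b1: "bij t" using transp_permutes[of t n] Cons.prems permutes_bij by auto
  have b2: "bij (lprod ts)" using lprod_permutes[of ts n] Cons.prems permutes_bij by auto
  have ti: "inv t = t" using Cons.prems by (auto elim: transp_setE)
  have "inv (lprod (t # ts)) = inv (lprod ts) \<circ> inv t" by (simp add: o_inv_distrib[OF b1 b2])
  also have "\<dots> = lprod (rev ts) \<circ> t" using Cons ti by simp
  also have "\<dots> = lprod (rev (t # ts))" by (simp add: lprod_snoc)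
  finally show ?case .
qed

lemma Sigma_incr:
  assumes n: "1 \<le> n" and g: "\<gamma> \<in> Sigma_nk n k"
  shows "incr (lprod \<gamma>)"
proof -
  define \<sigma> where "\<sigma> = lprod \<gamma>"
  define c where "c = long_cycle n"
  have gs: "set \<gamma> \<subseteq> transp_set n" "plen n \<sigma> = k" "pleq n \<sigma> c"
    using g unfolding Sigma_nk_def \<sigma>_def c_def by auto
  have ps: "\<sigma> permutes {1..n}" unfolding \<sigma>_def by (rule lprod_permutes[OF gs(1)])
  have pc: "c permutes {1..n}" unfolding c_def by (rule lc_permutes[OF n])
  define \<rho> where "\<rho> = inv \<sigma> \<circ> c"
  have pr: "\<rho> permutes {1..n}" unfolding \<rho>_def by (rule permutes_compose[OF pc permutes_inv[OF ps]])
  have pl: "plen n c = plen n \<sigma> + plen n \<rho>" using gs(3) unfolding pleq_def \<rho>_def .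
  have nc: "ncycles n c = 1" unfolding c_def by (rule lc_ncycles[OF n])
  obtain ts where ts: "set ts \<subseteq> transp_set n" "length ts = n - ncycles n \<rho>" "lprod ts = \<rho>"
    using perm_decomp[OF pr refl] by blast
  have "\<sigma> \<circ> \<rho> = c" unfolding \<rho>_def by (simp only: comp_assoc[symmetric] permutes_inv_o(1)[OF ps] id_comp)
  then have e1: "c \<circ> inv \<rho> = \<sigma> \<circ> (\<rho> \<circ> inv \<rho>)" by (simp only: comp_assoc[symmetric])
  have e2: "\<rho> \<circ> inv \<rho> = id" by (rule permutes_inv_o(1)[OF pr])
  have sc0: "\<sigma> = c \<circ> inv \<rho>" using e1 unfolding e2 comp_id by (rule sym)
  have ir: "inv \<rho> = lprod (rev ts)" using inv_lprod[OF ts(1)] unfolding ts(3) .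
  have sc: "\<sigma> = c \<circ> lprod (rev ts)" using sc0 unfolding ir .
  have "ncycles n (c \<circ> lprod (rev ts)) = ncycles n c + length (rev ts)"
    using pl nc ts(2) ncycles_le[of n \<sigma>] ncycles_le[of n \<rho>] n sc unfolding plen_def by simp
  then have "incr (c \<circ> lprod (rev ts))"
    using chain_incr[OF pc _ _] lc_incr[OF n] ts(1) unfolding c_def by simp
  then show ?thesis using sc unfolding \<sigma>_def by simp
qed




lemma peel:
  fixes ts :: "(nat \<Rightarrow> nat) list"
  assumes ts: "set ts \<subseteq> transp_set n" and ab: "1 \<le> a" "a < b" "b \<le> n"
    and inc: "incr (lprod ts \<circ> transpose a b)"
    and pl: "ncycles n (lprod ts \<circ> transpose a b) + (length ts + 1) = n"
  shows "b \<in> orbit_of (lprod ts \<circ> transpose a b) a \<and> incr (lprod ts) \<and>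
         ncycles n (lprod ts) + length ts = n \<and>
         orbit_of (lprod ts) a = orbit_of (lprod ts \<circ> transpose a b) a - {a<..b} \<and>
         orbit_of (lprod ts) b = orbit_of (lprod ts \<circ> transpose a b) a \<inter> {a<..b} \<and>
         (\<forall>y. y \<notin> orbit_of (lprod ts \<circ> transpose a b) a \<longrightarrow>
              orbit_of (lprod ts) y = orbit_of (lprod ts \<circ> transpose a b) y)"
proof -
  define \<sigma> where "\<sigma> = lprod ts \<circ> transpose a b"
  have tT: "transpose a b \<in> transp_set n" using ab by (rule transp_setI)
  have ps: "\<sigma> permutes {1..n}" unfolding \<sigma>_def
    by (rule transp_comp_permutes[OF lprod_permutes[OF ts] tT])
  have e: "lprod ts = \<sigma> \<circ> transpose a b" unfolding \<sigma>_def by (simp add: comp_assoc)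
  have lo0: "n \<le> ncycles n (lprod ts) + length ts" by (rule ncycles_lprod_lower[OF ts])
  have lo: "n \<le> ncycles n (\<sigma> \<circ> transpose a b) + length ts" using lo0 unfolding e .
  have pl': "ncycles n \<sigma> + (length ts + 1) = n" using pl unfolding \<sigma>_def .
  have up: "ncycles n (\<sigma> \<circ> transpose a b) \<le> ncycles n \<sigma> + 1"
    using ab by (intro ncycles_upper[OF ps]) auto
  have bo: "b \<in> orbit_of \<sigma> a"
  proof (rule ccontr)
    assume "b \<notin> orbit_of \<sigma> a"
    then have "ncycles n (\<sigma> \<circ> transpose a b) + 1 \<le> ncycles n \<sigma>"
      using ab by (intro ncycles_merge[OF ps]) auto
    then show False using lo pl' by linarith
  qed
  have nc: "ncycles n (lprod ts) + length ts = n" using lo up pl' unfolding e by linarith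
  have sp: "incr (\<sigma> \<circ> transpose a b) \<and>
         orbit_of (\<sigma> \<circ> transpose a b) a = orbit_of \<sigma> a - {a<..b} \<and>
         orbit_of (\<sigma> \<circ> transpose a b) b = orbit_of \<sigma> a \<inter> {a<..b} \<and>
         (\<forall>y. y \<notin> orbit_of \<sigma> a \<longrightarrow> orbit_of (\<sigma> \<circ> transpose a b) y = orbit_of \<sigma> y)"
    using incr_split[OF ps _ ab bo] inc unfolding \<sigma>_def by blast
  show ?thesis using bo nc sp unfolding e[symmetric] \<sigma>_def[symmetric] by blast
qed

definition PK :: "nat set \<Rightarrow> nat list \<Rightarrow> bool" where
  "PK C ms \<longleftrightarrow> length (filter (\<lambda>m. m \<in> C) ms) + 1 = card C \<and>
     (\<forall>t. card {y\<in>C. y \<le> t} \<le> length (filter (\<lambda>m. m \<in> C \<and> m \<le> t) ms) + (if Max C \<le> t then 1 else 0))"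

lemma length_filter_disj:
  assumes "\<And>m. P m \<longleftrightarrow> Q1 m \<or> Q2 m" "\<And>m. \<not> (Q1 m \<and> Q2 m)"
  shows "length (filter P xs) = length (filter Q1 xs) + length (filter Q2 xs)"
  by (induction xs) (use assms in auto)

lemma parking:
  "set ts \<subseteq> transp_set n \<Longrightarrow> incr (lprod ts) \<Longrightarrow> ncycles n (lprod ts) + length ts = n \<Longrightarrow>
   x \<in> {1..n} \<Longrightarrow> PK (orbit_of (lprod ts) x) (map tmin ts)"
proof (induction ts arbitrary: x rule: rev_induct)
  case Nil
  have o: "orbit_of (lprod []) x = {x}" by (rule orbit_of_fixed) simp
  have "{y\<in>{x}. y \<le> t} = (if x \<le> t then {x} else {})" for t by auto
  then show ?case unfolding PK_def o by simp
next
  case (snoc \<tau> ts)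
  have ts: "set ts \<subseteq> transp_set n" and tT: "\<tau> \<in> transp_set n" using snoc.prems(1) by auto
  obtain a b where t': "\<tau> = transpose a b" "1 \<le> a" "a < b" "b \<le> n" using tT by (rule transp_setE)
  define \<sigma> where "\<sigma> = lprod ts \<circ> transpose a b"
  have se: "lprod (ts @ [\<tau>]) = \<sigma>" unfolding \<sigma>_def t'(1) lprod_snoc ..
  have "\<sigma> permutes {1..n}" unfolding \<sigma>_def using t'
    by (intro transp_comp_permutes[OF lprod_permutes[OF ts]] transp_setI)
  then have pp: "permutation \<sigma>" by (rule perm_n)
  define C where "C = orbit_of \<sigma> a"
  have P: "b \<in> C \<and> incr (lprod ts) \<and> ncycles n (lprod ts) + length ts = n \<and>
         orbit_of (lprod ts) a = C - {a<..b} \<and> orbit_of (lprod ts) b = C \<inter> {a<..b} \<and>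
         (\<forall>y. y \<notin> C \<longrightarrow> orbit_of (lprod ts) y = orbit_of \<sigma> y)"
  proof -
    have i1: "incr (lprod ts \<circ> transpose a b)" using snoc.prems(2) unfolding se \<sigma>_def .
    have n1: "ncycles n (lprod ts \<circ> transpose a b) + (length ts + 1) = n"
      using snoc.prems(3) unfolding se \<sigma>_def length_append_singleton by linarith
    show ?thesis using peel[OF ts t'(2,3,4) i1 n1] unfolding \<sigma>_def[symmetric] C_def[symmetric] by blast
  qed
  have IH: "\<And>y. y \<in> {1..n} \<Longrightarrow> PK (orbit_of (lprod ts) y) (map tmin ts)"
    using snoc.IH ts P by blast
  have mt: "map tmin (ts @ [\<tau>]) = map tmin ts @ [a]" using t' by (simp add: tmin_transpose)
  let ?ms = "map tmin ts"
  show ?case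
  proof (cases "a \<in> orbit_of \<sigma> x")
    case False
    have "x \<notin> C"
    proof
      assume "x \<in> C"
      then have "orbit_of \<sigma> x = C" unfolding C_def by (rule orbit_of_eq[OF pp])
      then show False using False C_def by simp
    qed
    then have ox: "orbit_of (lprod ts) x = orbit_of \<sigma> x" using P by blast
    have "PK (orbit_of \<sigma> x) ?ms" using IH[OF snoc.prems(4)] ox by simp
    then show ?thesis unfolding se mt PK_def using False by simp
  next
    case True
    have Cx: "orbit_of \<sigma> x = C" unfolding C_def
      using orbit_of_eq[OF pp True] orbit_of_eq[OF pp orbit_of_sym[OF pp True]] by simp
    define C1 where "C1 = C - {a<..b}"
    define C2 where "C2 = C \<inter> {a<..b}"
    have fC: "finite C" unfolding C_def by (rule orbit_of_finite[OF pp])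
    have fC12: "finite C1" "finite C2" using fC unfolding C1_def C2_def by auto
    have aC1: "a \<in> C1" unfolding C1_def C_def by simp
    have bC2: "b \<in> C2" unfolding C2_def using P t' by simp
    have CU: "C = C1 \<union> C2" and dj: "C1 \<inter> C2 = {}" unfolding C1_def C2_def by auto
    have an: "a \<in> {1..n}" "b \<in> {1..n}" using t' by auto
    have PK1: "PK C1 ?ms" using IH[OF an(1)] P unfolding C1_def by simp
    have PK2: "PK C2 ?ms" using IH[OF an(2)] P unfolding C2_def by simp
    have cC: "card C = card C1 + card C2" unfolding CU using fC12 dj by (rule card_Un_disjoint)
    have q1: "length (filter (\<lambda>m. m \<in> C) ?ms) = length (filter (\<lambda>m. m \<in> C1) ?ms) + length (filter (\<lambda>m. m \<in> C2) ?ms)"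
      by (rule length_filter_disj) (use CU dj in auto)
    have q2: "length (filter (\<lambda>m. m \<in> C \<and> m \<le> t) ?ms) = length (filter (\<lambda>m. m \<in> C1 \<and> m \<le> t) ?ms) + length (filter (\<lambda>m. m \<in> C2 \<and> m \<le> t) ?ms)" for t
      by (rule length_filter_disj) (use CU dj in auto)
    have cq: "card {y\<in>C. y \<le> t} = card {y\<in>C1. y \<le> t} + card {y\<in>C2. y \<le> t}" for t
    proof -
      have "{y\<in>C. y \<le> t} = {y\<in>C1. y \<le> t} \<union> {y\<in>C2. y \<le> t}" using CU by auto
      then show ?thesis using fC12 dj by (simp add: card_Un_disjoint disjoint_iff)
    qed
    have aC: "a \<in> C" unfolding C_def by simp
    have MC2: "Max C2 = b" using fC12(2) bC2 unfolding C2_def by (intro Max_eqI) auto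
    have ineq: "(if Max C1 \<le> t then 1 else 0) + (if Max C2 \<le> t then 1 else 0)
                \<le> (if a \<le> t then 1 else (0::nat)) + (if Max C \<le> t then 1 else 0)" for t
    proof -
      have a1: "a \<le> Max C1" using Max_ge[OF fC12(1) aC1] .
      have "Max C \<in> C" using Max_in[OF fC] aC by auto
      then have "Max C \<le> Max C1 \<or> Max C \<le> Max C2"
        using CU Max_ge[OF fC12(1)] Max_ge[OF fC12(2)] by auto
      then show ?thesis using a1 MC2 t'(3) by auto
    qed
    have "PK C (?ms @ [a])"
      unfolding PK_def
    proof (intro conjI allI)
      show "length (filter (\<lambda>m. m \<in> C) (?ms @ [a])) + 1 = card C"
        using PK1 PK2 q1 cC aC unfolding PK_def by simp
      fix t
      have h1: "card {y\<in>C1. y \<le> t} \<le> length (filter (\<lambda>m. m \<in> C1 \<and> m \<le> t) ?ms) + (if Max C1 \<le> t then 1 else 0)"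
        using PK1 unfolding PK_def by blast
      have h2: "card {y\<in>C2. y \<le> t} \<le> length (filter (\<lambda>m. m \<in> C2 \<and> m \<le> t) ?ms) + (if Max C2 \<le> t then 1 else 0)"
        using PK2 unfolding PK_def by blast
      have "length (filter (\<lambda>m. m \<in> C \<and> m \<le> t) (?ms @ [a])) = length (filter (\<lambda>m. m \<in> C \<and> m \<le> t) ?ms) + (if a \<le> t then 1 else 0)"
        using aC by simp
      then show "card {y\<in>C. y \<le> t} \<le> length (filter (\<lambda>m. m \<in> C \<and> m \<le> t) (?ms @ [a])) + (if Max C \<le> t then 1 else 0)"
        using h1 h2 q2[of t] cq[of t] ineq[of t] by linarith
    qed
    then show ?thesis unfolding se mt Cx .
  qed
qed




lemma no_lt:
  assumes ts: "set ts \<subseteq> transp_set n" and us: "set us \<subseteq> transp_set n"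
    and ab: "1 \<le> a" "a < b" "b \<le> n" and ab': "a < b'" "b' \<le> n" and bb: "b < b'"
    and eq: "lprod ts \<circ> transpose a b = lprod us \<circ> transpose a b'"
    and inc: "incr (lprod ts \<circ> transpose a b)"
    and pl: "ncycles n (lprod ts \<circ> transpose a b) + (length ts + 1) = n"
    and len: "length us = length ts"
    and mt: "map tmin ts = map tmin us"
  shows False
proof -
  define \<sigma> where "\<sigma> = lprod ts \<circ> transpose a b"
  define C where "C = orbit_of \<sigma> a"
  have P1: "b \<in> C \<and> incr (lprod ts) \<and> ncycles n (lprod ts) + length ts = n \<and>
      orbit_of (lprod ts) b = C \<inter> {a<..b}"
    using peel[OF ts ab inc pl] unfolding \<sigma>_def[symmetric] C_def[symmetric] by blast
  have inc': "incr (lprod us \<circ> transpose a b')" using inc unfolding eq .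
  have pl': "ncycles n (lprod us \<circ> transpose a b') + (length us + 1) = n" using pl unfolding eq len .
  have P2: "b' \<in> C \<and> incr (lprod us) \<and> ncycles n (lprod us) + length us = n \<and>
      orbit_of (lprod us) b' = C \<inter> {a<..b'}"
    using peel[OF us ab(1) ab' inc' pl'] unfolding eq[symmetric] \<sigma>_def[symmetric] C_def[symmetric] by blast
  have b1: "b \<in> {1..n}" "b' \<in> {1..n}" using ab ab' by auto
  have K1: "PK (C \<inter> {a<..b}) (map tmin ts)"
  proof -
    have "incr (lprod ts)" "ncycles n (lprod ts) + length ts = n" using P1 by blast+
    from parking[OF ts this b1(1)] show ?thesis using P1 by simp
  qed
  have K2: "PK (C \<inter> {a<..b'}) (map tmin us)"
  proof -
    have "incr (lprod us)" "ncycles n (lprod us) + length us = n" using P2 by blast+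
    from parking[OF us this b1(2)] show ?thesis using P2 by simp
  qed
  define D where "D = C \<inter> {a<..b}"
  define D' where "D' = C \<inter> {a<..b'}"
  have fD': "finite D'" unfolding D'_def by simp
  have MD': "Max D' = b'" using fD' P2 ab' unfolding D'_def by (intro Max_eqI) auto
  have s: "{y\<in>D'. y \<le> b} = D" unfolding D_def D'_def using bb by auto
  have fl: "(\<lambda>m. m \<in> D' \<and> m \<le> b) = (\<lambda>m. m \<in> D)" unfolding D_def D'_def using bb by auto
  have "card {y\<in>D'. y \<le> b} \<le> length (filter (\<lambda>m. m \<in> D' \<and> m \<le> b) (map tmin us)) + (if Max D' \<le> b then 1 else 0)"
    using K2 unfolding PK_def D'_def[symmetric] by blast
  then have "card D \<le> length (filter (\<lambda>m. m \<in> D) (map tmin us))"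
    unfolding s fl using MD' bb by simp
  moreover have "length (filter (\<lambda>m. m \<in> D) (map tmin ts)) + 1 = card D"
    using K1 unfolding PK_def D_def[symmetric] by blast
  ultimately show False using mt by simp
qed

lemma factor_inj:
  "set ts \<subseteq> transp_set n \<Longrightarrow> set us \<subseteq> transp_set n \<Longrightarrow> lprod ts = lprod us \<Longrightarrow>
   incr (lprod ts) \<Longrightarrow> ncycles n (lprod ts) + length ts = n \<Longrightarrow> length us = length ts \<Longrightarrow>
   map tmin ts = map tmin us \<Longrightarrow> ts = us"
proof (induction ts arbitrary: us rule: rev_induct)
  case Nil then show ?case by simp
next
  case (snoc \<tau> ts)
  have "us \<noteq> []" using snoc.prems(6) by auto
  then obtain us' \<upsilon> where u: "us = us' @ [\<upsilon>]" using rev_exhaust by blast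
  have ts: "set ts \<subseteq> transp_set n" and tT: "\<tau> \<in> transp_set n" using snoc.prems(1) by auto
  have us: "set us' \<subseteq> transp_set n" and uT: "\<upsilon> \<in> transp_set n" using snoc.prems(2) u by auto
  obtain a b where t': "\<tau> = transpose a b" "1 \<le> a" "a < b" "b \<le> n" using tT by (rule transp_setE)
  obtain a' b' where u': "\<upsilon> = transpose a' b'" "1 \<le> a'" "a' < b'" "b' \<le> n" using uT by (rule transp_setE)
  have len: "length us' = length ts" using snoc.prems(6) u by simp
  have mt0: "map tmin ts @ [a] = map tmin us' @ [a']"
    using snoc.prems(7) u t' u' by (simp add: tmin_transpose)
  then have mt: "map tmin ts = map tmin us'" and aa: "a' = a" by auto
  have eq: "lprod ts \<circ> transpose a b = lprod us' \<circ> transpose a b'"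
    using snoc.prems(3) unfolding u lprod_snoc t'(1) u'(1) aa .
  have inc: "incr (lprod ts \<circ> transpose a b)" using snoc.prems(4) unfolding lprod_snoc t'(1) .
  have pl: "ncycles n (lprod ts \<circ> transpose a b) + (length ts + 1) = n"
    using snoc.prems(5) unfolding lprod_snoc length_append_singleton t'(1) by linarith
  have bb: "b = b'"
  proof (rule ccontr)
    assume "b \<noteq> b'"
    then consider "b < b'" | "b' < b" by linarith
    then show False
    proof cases
      case 1
      show False by (rule no_lt[OF ts us t'(2,3,4) u'(3,4)[unfolded aa] 1 eq inc pl len mt])
    next
      case 2
      have inc2: "incr (lprod us' \<circ> transpose a b')" using inc unfolding eq .
      have pl2: "ncycles n (lprod us' \<circ> transpose a b') + (length us' + 1) = n" using pl unfolding eq len .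
      show False by (rule no_lt[OF us ts u'(2,3,4)[unfolded aa] t'(3,4) 2 eq[symmetric] inc2 pl2 len[symmetric] mt[symmetric]])
    qed
  qed
  have tu: "\<tau> = \<upsilon>" using t' u' aa bb by simp
  have "lprod ts = lprod us'"
  proof -
    have "lprod ts \<circ> \<tau> \<circ> \<tau> = lprod us' \<circ> \<tau> \<circ> \<tau>" using eq unfolding t'(1) bb by (rule arg_cong)
    then show ?thesis unfolding t'(1) comp_assoc transpose_comp_involutory comp_id .
  qed
  moreover have "incr (lprod ts) \<and> ncycles n (lprod ts) + length ts = n"
    using peel[OF ts t'(2,3,4) inc pl] by blast
  ultimately have "ts = us'" using snoc.IH[OF ts us] len mt by blast
  then show ?case using u tu by simp
qed




lemma conj_transpose:
  "transpose c d \<circ> transpose a b \<circ> transpose c d = transpose (transpose c d a) (transpose c d b)"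
  by (auto simp: fun_eq_iff transpose_def)

lemma tmin_conj_less:
  assumes "a < b" "c < d" "a < c"
  shows "tmin (transpose c d \<circ> transpose a b \<circ> transpose c d) = a"
proof -
  have ha: "transpose c d a = a" using assms by (auto simp: transpose_def)
  have hb: "a < transpose c d b" using assms by (auto simp: transpose_def)
  show ?thesis unfolding conj_transpose ha using hb by (rule tmin_transpose)
qed

lemma lprod_upd2:
  "Suc i < length xs \<Longrightarrow> x \<circ> y = xs ! i \<circ> xs ! Suc i \<Longrightarrow>
   lprod (xs[i := x, Suc i := y]) = lprod xs"
proof (induction xs arbitrary: i)
  case Nil then show ?case by simp
next
  case (Cons p rest)
  show ?case
  proof (cases i)
    case 0
    then obtain q r where r: "rest = q # r" using Cons.prems(1) by (cases rest) auto
    have h: "x \<circ> y = p \<circ> q" using Cons.prems(2) unfolding 0 r nth_Cons_0 nth_Cons_Suc .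
    have "x \<circ> (y \<circ> lprod r) = p \<circ> (q \<circ> lprod r)" by (simp only: comp_assoc[symmetric] h)
    then show ?thesis unfolding 0 r by (simp only: list_update_code lprod_Cons)
  next
    case (Suc j)
    then have "lprod (rest[j := x, Suc j := y]) = lprod rest"
      using Cons by simp
    then show ?thesis unfolding Suc by simp
  qed
qed

lemma map_upd2: "map f (xs[i := x, j := y]) = (map f xs)[i := f x, j := f y]"
  by (simp add: map_update)

lemma upt_1: "[1..<m + 1] = map Suc [0..<m]"
  using map_Suc_upt[of 0 m] by simp

lemma seq_act_alt: "seq_act \<pi> xs = map (\<lambda>i. xs ! (inv \<pi> (Suc i) - 1)) [0..<length xs]"
  unfolding seq_act_def upt_1 by simp

lemma seq_act_length[simp]: "length (seq_act \<pi> xs) = length xs"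
  unfolding seq_act_alt by simp

lemma seq_act_nth: "j < length xs \<Longrightarrow> seq_act \<pi> xs ! j = xs ! (inv \<pi> (Suc j) - 1)"
  unfolding seq_act_alt by simp

lemma seq_act_id: "seq_act id xs = xs"
  by (rule nth_equalityI) (simp_all add: seq_act_nth)

lemma seq_act_comp:
  assumes p: "\<pi> permutes {1..k}" and r: "\<rho> permutes {1..k}" and len: "length xs = k"
  shows "seq_act (\<pi> \<circ> \<rho>) xs = seq_act \<pi> (seq_act \<rho> xs)"
proof (rule nth_equalityI)
  show "length (seq_act (\<pi> \<circ> \<rho>) xs) = length (seq_act \<pi> (seq_act \<rho> xs))" by simp
  fix j assume "j < length (seq_act (\<pi> \<circ> \<rho>) xs)"
  then have j: "j < k" using len by simp
  have bp: "bij \<pi>" "bij \<rho>" using p r permutes_bij by auto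
  have iv: "inv (\<pi> \<circ> \<rho>) = inv \<rho> \<circ> inv \<pi>" by (rule o_inv_distrib[OF bp])
  have ip: "inv \<pi> (Suc j) \<in> {1..k}" using permutes_in_image[OF permutes_inv[OF p]] j by simp
  then have ip': "inv \<pi> (Suc j) - 1 < length xs" using len by auto
  have "seq_act \<pi> (seq_act \<rho> xs) ! j = seq_act \<rho> xs ! (inv \<pi> (Suc j) - 1)"
    using j len by (simp add: seq_act_nth)
  also have "\<dots> = xs ! (inv \<rho> (Suc (inv \<pi> (Suc j) - 1)) - 1)"
    using ip' by (simp add: seq_act_nth)
  also have "Suc (inv \<pi> (Suc j) - 1) = inv \<pi> (Suc j)" using ip by simp
  finally show "seq_act (\<pi> \<circ> \<rho>) xs ! j = seq_act \<pi> (seq_act \<rho> xs) ! j"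
    using j len iv by (simp add: seq_act_nth)
qed

lemma seq_act_swap:
  assumes l: "1 \<le> l" "l < length xs"
  shows "seq_act (transpose l (l+1)) xs = xs[l - 1 := xs ! l, l := xs ! (l - 1)]"
proof (rule nth_equalityI)
  fix j assume "j < length (seq_act (transpose l (l+1)) xs)"
  then have j: "j < length xs" by simp
  have "seq_act (transpose l (l+1)) xs ! j = xs ! (transpose l (l+1) (Suc j) - 1)"
    using j by (simp add: seq_act_nth)
  also have "\<dots> = xs[l - 1 := xs ! l, l := xs ! (l - 1)] ! j"
    using j l by (auto simp: transpose_def nth_list_update)
  finally show "seq_act (transpose l (l+1)) xs ! j = xs[l - 1 := xs ! l, l := xs ! (l - 1)] ! j" .
qed simp




lemma transp_inv: "g \<in> transp_set n \<Longrightarrow> inv g = g"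
  by (auto elim: transp_setE)

lemma transp_invol: "g \<in> transp_set n \<Longrightarrow> g \<circ> g = id"
  by (auto elim: transp_setE)

lemma Sigma_same_prod:
  assumes g: "\<gamma> \<in> Sigma_nk n k" and len: "length \<gamma>' = k" and s: "set \<gamma>' \<subseteq> transp_set n"
    and p: "lprod \<gamma>' = lprod \<gamma>"
  shows "\<gamma>' \<in> Sigma_nk n k"
  using g len s p unfolding Sigma_nk_def by simp

lemma sigma_op_props:
  assumes g: "\<gamma> \<in> Sigma_nk n k" and l: "1 \<le> l" "l < k"
  shows "sigma_op l \<gamma> \<in> Sigma_nk n k \<and> lprod (sigma_op l \<gamma>) = lprod \<gamma> \<and>
         Pmap (sigma_op l \<gamma>) = seq_act (transpose l (l+1)) (Pmap \<gamma>)"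
proof -
  obtain i where i: "l = Suc i" using l by (cases l) auto
  have li: "l - 1 = i" using i by simp
  have len: "length \<gamma> = k" and sg: "set \<gamma> \<subseteq> transp_set n" using g unfolding Sigma_nk_def by auto
  define x where "x = \<gamma> ! i"
  define y where "y = \<gamma> ! l"
  have xT: "x \<in> transp_set n" unfolding x_def using sg len l i by (auto intro!: subsetD[OF sg] nth_mem)
  have yT: "y \<in> transp_set n" unfolding y_def using sg len l by (auto intro!: subsetD[OF sg] nth_mem)
  obtain a b where x': "x = transpose a b" "1 \<le> a" "a < b" "b \<le> n" using xT by (rule transp_setE)
  obtain c d where y': "y = transpose c d" "1 \<le> c" "c < d" "d \<le> n" using yT by (rule transp_setE)
  have tx: "tmin x = a" and ty: "tmin y = c" using x' y' by (simp_all add: tmin_transpose)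
  have lenP: "length (Pmap \<gamma>) = k" unfolding Pmap_def using len by simp
  have Pi: "Pmap \<gamma> ! i = a" "Pmap \<gamma> ! l = c"
    unfolding Pmap_def using len l i tx ty x_def y_def by auto
  have sw: "seq_act (transpose l (l+1)) (Pmap \<gamma>) = (Pmap \<gamma>)[i := c, l := a]"
    using seq_act_swap[of l "Pmap \<gamma>"] l lenP Pi li by simp
  have il: "Suc i < length \<gamma>" using len l i by simp
  have upd: "P \<gamma>' \<Longrightarrow> \<gamma>' = \<gamma>[i := u, l := v] \<Longrightarrow> u \<in> transp_set n \<Longrightarrow> v \<in> transp_set n \<Longrightarrow>
     u \<circ> v = x \<circ> y \<Longrightarrow> tmin u = c \<Longrightarrow> tmin v = a \<Longrightarrow>
     \<gamma>' \<in> Sigma_nk n k \<and> lprod \<gamma>' = lprod \<gamma> \<and> Pmap \<gamma>' = (Pmap \<gamma>)[i := c, l := a]" for P \<gamma>' u v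
  proof -
    assume e: "\<gamma>' = \<gamma>[i := u, l := v]" and uv: "u \<in> transp_set n" "v \<in> transp_set n"
      and pr: "u \<circ> v = x \<circ> y" and tu: "tmin u = c" and tv: "tmin v = a"
    have lp: "lprod \<gamma>' = lprod \<gamma>" unfolding e i using il pr x_def y_def i
      by (intro lprod_upd2) auto
    have "set \<gamma>' \<subseteq> transp_set n" unfolding e using sg uv
      by (meson insert_subset order_trans set_update_subset_insert)
    moreover have "length \<gamma>' = k" unfolding e using len by simp
    ultimately have "\<gamma>' \<in> Sigma_nk n k" using Sigma_same_prod[OF g _ _ lp] by blast
    moreover have "Pmap \<gamma>' = (Pmap \<gamma>)[i := c, l := a]" unfolding e Pmap_def map_upd2 tu tv ..
    ultimately show ?thesis using lp by blast
  qed
  show ?thesis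
  proof (cases "a = c")
    case True
    have so: "sigma_op l \<gamma> = \<gamma>" unfolding sigma_op_def li using tx ty True x_def y_def by simp
    have "(Pmap \<gamma>)[i := c, l := a] = (Pmap \<gamma>)[i := Pmap \<gamma> ! i, l := Pmap \<gamma> ! l]" using Pi True by simp
    also have "\<dots> = Pmap \<gamma>" by (simp only: list_update_id)
    finally have "(Pmap \<gamma>)[i := c, l := a] = Pmap \<gamma>" .
    then show ?thesis unfolding so sw using g by simp
  next
    case False
    show ?thesis
    proof (cases "a < c")
      case True
      have so: "sigma_op l \<gamma> = \<gamma>[i := y, l := y \<circ> x \<circ> y]"
        unfolding sigma_op_def beta_def li using tx ty True x_def y_def transp_inv[OF yT] by simp
      have pr: "y \<circ> (y \<circ> x \<circ> y) = x \<circ> y"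
        by (simp only: comp_assoc[symmetric] transp_invol[OF yT] id_comp)
      have t2: "tmin (y \<circ> x \<circ> y) = a" unfolding x' y' using x' y' True by (intro tmin_conj_less)
      show ?thesis using upd[OF _ so yT transp_conj[OF xT yT] pr ty t2] sw by simp
    next
      case False
      then have ca: "c < a" using \<open>a \<noteq> c\<close> by simp
      have so: "sigma_op l \<gamma> = \<gamma>[i := x \<circ> y \<circ> x, l := x]"
        unfolding sigma_op_def beta_inv_def li using tx ty False \<open>a \<noteq> c\<close> x_def y_def transp_inv[OF xT] by simp
      have pr: "(x \<circ> y \<circ> x) \<circ> x = x \<circ> y"
        by (simp only: comp_assoc transp_invol[OF xT] comp_id)
      have t2: "tmin (x \<circ> y \<circ> x) = c" unfolding x' y' using x' y' ca by (intro tmin_conj_less)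
      show ?thesis using upd[OF _ so transp_conj[OF yT xT] xT pr t2 tx] sw by simp
    qed
  qed
qed




lemma adj_induct:
  fixes k :: nat and \<pi> :: "nat \<Rightarrow> nat"
  assumes p: "\<pi> permutes {1..k}" and base: "P id"
    and step: "\<And>\<pi> l. \<pi> permutes {1..k} \<Longrightarrow> P \<pi> \<Longrightarrow> 1 \<le> l \<Longrightarrow> l < k \<Longrightarrow> P (transpose l (l+1) \<circ> \<pi>)"
  shows "P \<pi>"
proof -
  have T: "\<forall>\<pi>. \<pi> permutes {1..k} \<longrightarrow> P \<pi> \<longrightarrow> P (transpose a (a + Suc d) \<circ> \<pi>)"
    if a1: "1 \<le> a" and a2: "a + Suc d \<le> k" for a d
    using a2
  proof (induction d)
    case 0
    show ?case
    proof (intro allI impI)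
      fix \<pi> assume "\<pi> permutes {1..k}" "P \<pi>"
      then show "P (transpose a (a + Suc 0) \<circ> \<pi>)" using step[of \<pi> a] a1 0 by simp
    qed
  next
    case (Suc d)
    show ?case
    proof (intro allI impI)
      fix \<pi> assume pp: "\<pi> permutes {1..k}" and Pp: "P \<pi>"
      define b0 where "b0 = a + Suc d"
      define s where "s = transpose b0 (b0 + 1)"
      have b: "a + Suc (Suc d) = b0 + 1" unfolding b0_def by simp
      have sp: "s permutes {1..k}" unfolding s_def b0_def using Suc.prems a1 by (intro permutes_swap_id) auto
      have sp1: "(s \<circ> \<pi>) permutes {1..k}" by (rule permutes_compose[OF pp sp])
      have P1: "P (s \<circ> \<pi>)" unfolding s_def using step[OF pp Pp, of b0] Suc.prems a1 b0_def by simp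
      have t0p: "transpose a b0 permutes {1..k}" unfolding b0_def using Suc.prems a1 by (intro permutes_swap_id) auto
      have sp2: "(transpose a b0 \<circ> (s \<circ> \<pi>)) permutes {1..k}" by (rule permutes_compose[OF sp1 t0p])
      have IH: "\<forall>\<pi>. \<pi> permutes {1..k} \<longrightarrow> P \<pi> \<longrightarrow> P (transpose a b0 \<circ> \<pi>)"
      proof -
        have "a + Suc d \<le> k" using Suc.prems by simp
        from Suc.IH[OF this] show ?thesis unfolding b0_def .
      qed
      have P2: "P (transpose a b0 \<circ> (s \<circ> \<pi>))" using IH sp1 P1 by blast
      have bb: "1 \<le> b0" "b0 < k" using Suc.prems a1 unfolding b0_def by auto
      have P3: "P (s \<circ> (transpose a b0 \<circ> (s \<circ> \<pi>)))"
        using step[OF sp2 P2 bb] unfolding s_def .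
      have "s \<circ> transpose a b0 \<circ> s = transpose (s a) (s b0)" unfolding s_def by (rule conj_transpose)
      also have "s a = a" unfolding s_def b0_def by (simp add: transpose_def)
      also have "s b0 = a + Suc (Suc d)" unfolding s_def b b0_def by simp
      finally have E: "s \<circ> transpose a b0 \<circ> s = transpose a (a + Suc (Suc d))" .
      have "s \<circ> (transpose a b0 \<circ> (s \<circ> \<pi>)) = (s \<circ> transpose a b0 \<circ> s) \<circ> \<pi>" by (simp only: comp_assoc)
      then have "s \<circ> (transpose a b0 \<circ> (s \<circ> \<pi>)) = transpose a (a + Suc (Suc d)) \<circ> \<pi>" unfolding E .
      then show "P (transpose a (a + Suc (Suc d)) \<circ> \<pi>)" using P3 by simp
    qed
  qed
  have fk: "finite {1..k}" by simp
  show ?thesis using p fk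
  proof (induction rule: permutes_induct)
    case id then show ?case by (rule base)
  next
    case (swap a b q)
    have ab: "a \<in> {1..k}" "b \<in> {1..k}" "a \<noteq> b" using swap(1,2,3) by auto
    show ?case
    proof (cases "a < b")
      case True
      obtain d where d: "b = a + Suc d" using less_imp_Suc_add[OF True] add_Suc_right by metis
      have "1 \<le> a" "a + Suc d \<le> k" using ab d by auto
      from T[OF this] swap(4,5) show ?thesis unfolding d by blast
    next
      case False
      then have "b < a" using ab by simp
      then obtain d where d: "a = b + Suc d" using less_imp_Suc_add[of b a] add_Suc_right by metis
      have "1 \<le> b" "b + Suc d \<le> k" using ab d by auto
      from T[OF this] swap(4,5) have "P (transpose b a \<circ> q)" unfolding d by blast
      then show ?thesis by (subst transpose_commute)
    qed
  qed
qed




lemmas adj_induct' = adj_induct[consumes 1, case_names id step]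

definition spec :: "nat \<Rightarrow> nat \<Rightarrow> (nat \<Rightarrow> nat) \<Rightarrow> (nat \<Rightarrow> nat) list \<Rightarrow> (nat \<Rightarrow> nat) list \<Rightarrow> bool" where
  "spec n k \<pi> \<gamma> \<gamma>' \<longleftrightarrow> \<gamma>' \<in> Sigma_nk n k \<and> lprod \<gamma>' = lprod \<gamma> \<and> Pmap \<gamma>' = seq_act \<pi> (Pmap \<gamma>)"

definition actA :: "nat \<Rightarrow> nat \<Rightarrow> (nat \<Rightarrow> nat) \<Rightarrow> (nat \<Rightarrow> nat) list \<Rightarrow> (nat \<Rightarrow> nat) list" where
  "actA n k \<pi> \<gamma> = (THE \<gamma>'. spec n k \<pi> \<gamma> \<gamma>')"

lemma Sigma_facts:
  assumes "\<gamma> \<in> Sigma_nk n k"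
  shows "set \<gamma> \<subseteq> transp_set n" "length \<gamma> = k" "ncycles n (lprod \<gamma>) + length \<gamma> = n"
    "length (Pmap \<gamma>) = k"
proof -
  show "set \<gamma> \<subseteq> transp_set n" "length \<gamma> = k" using assms unfolding Sigma_nk_def by auto
  have "plen n (lprod \<gamma>) = k" using assms unfolding Sigma_nk_def by auto
  then show "ncycles n (lprod \<gamma>) + length \<gamma> = n"
    using ncycles_le[of n "lprod \<gamma>"] \<open>length \<gamma> = k\<close> unfolding plen_def by linarith
  show "length (Pmap \<gamma>) = k" unfolding Pmap_def using \<open>length \<gamma> = k\<close> by simp
qed

lemma Sigma_unique:
  assumes n: "1 \<le> n" and g1: "\<gamma>1 \<in> Sigma_nk n k" and g2: "\<gamma>2 \<in> Sigma_nk n k"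
    and p: "lprod \<gamma>1 = lprod \<gamma>2" and m: "Pmap \<gamma>1 = Pmap \<gamma>2"
  shows "\<gamma>1 = \<gamma>2"
proof (rule factor_inj)
  show "set \<gamma>1 \<subseteq> transp_set n" "set \<gamma>2 \<subseteq> transp_set n" using Sigma_facts g1 g2 by auto
  show "lprod \<gamma>1 = lprod \<gamma>2" by (rule p)
  show "incr (lprod \<gamma>1)" by (rule Sigma_incr[OF n g1])
  show "ncycles n (lprod \<gamma>1) + length \<gamma>1 = n" by (rule Sigma_facts(3)[OF g1])
  show "length \<gamma>2 = length \<gamma>1" using Sigma_facts(2)[OF g1] Sigma_facts(2)[OF g2] by simp
  show "map tmin \<gamma>1 = map tmin \<gamma>2" using m unfolding Pmap_def .
qed

lemma spec_exists:
  assumes n: "1 \<le> n" and p: "\<pi> permutes {1..k}"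
  shows "\<forall>\<gamma>\<in>Sigma_nk n k. \<exists>\<gamma>'. spec n k \<pi> \<gamma> \<gamma>'"
  using p
proof (induction rule: adj_induct')
  case id
  show ?case unfolding spec_def by (auto simp: seq_act_id)
next
  case (step \<pi> l)
  show ?case
  proof
    fix \<gamma> assume g: "\<gamma> \<in> Sigma_nk n k"
    obtain \<gamma>' where s: "spec n k \<pi> \<gamma> \<gamma>'" using step(4) g by blast
    have g': "\<gamma>' \<in> Sigma_nk n k" using s unfolding spec_def by blast
    have so: "sigma_op l \<gamma>' \<in> Sigma_nk n k \<and> lprod (sigma_op l \<gamma>') = lprod \<gamma>' \<and>
         Pmap (sigma_op l \<gamma>') = seq_act (transpose l (l+1)) (Pmap \<gamma>')"
      by (rule sigma_op_props[OF g' step(2,3)])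
    have sp: "transpose l (l+1) permutes {1..k}" using step(2,3) by (intro permutes_swap_id) auto
    have "seq_act (transpose l (l+1)) (Pmap \<gamma>') = seq_act (transpose l (l+1)) (seq_act \<pi> (Pmap \<gamma>))"
      using s unfolding spec_def by simp
    also have "\<dots> = seq_act (transpose l (l+1) \<circ> \<pi>) (Pmap \<gamma>)"
      by (rule seq_act_comp[OF sp step(1) Sigma_facts(4)[OF g], symmetric])
    finally have "spec n k (transpose l (l+1) \<circ> \<pi>) \<gamma> (sigma_op l \<gamma>')"
      using so s unfolding spec_def by simp
    then show "\<exists>\<gamma>''. spec n k (transpose l (l+1) \<circ> \<pi>) \<gamma> \<gamma>''" by blast
  qed
qed

lemma spec_unique:
  assumes n: "1 \<le> n" and s1: "spec n k \<pi> \<gamma> \<gamma>1" and s2: "spec n k \<pi> \<gamma> \<gamma>2"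
  shows "\<gamma>1 = \<gamma>2"
  using s1 s2 unfolding spec_def by (intro Sigma_unique[OF n]) auto

lemma actA_spec:
  assumes n: "1 \<le> n" and p: "\<pi> permutes {1..k}" and g: "\<gamma> \<in> Sigma_nk n k"
  shows "spec n k \<pi> \<gamma> (actA n k \<pi> \<gamma>)"
proof -
  obtain \<gamma>' where s: "spec n k \<pi> \<gamma> \<gamma>'" using spec_exists[OF n p] g by blast
  have "\<exists>!\<gamma>'. spec n k \<pi> \<gamma> \<gamma>'" using s spec_unique[OF n] by blast
  then show ?thesis unfolding actA_def by (rule theI')
qed

lemma actA_eq:
  assumes n: "1 \<le> n" and p: "\<pi> permutes {1..k}" and g: "\<gamma> \<in> Sigma_nk n k"
    and s: "spec n k \<pi> \<gamma> \<gamma>'"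
  shows "actA n k \<pi> \<gamma> = \<gamma>'"
  using spec_unique[OF n actA_spec[OF n p g] s] .

theorem proposition4p2:
  fixes n k :: nat
  assumes "1 \<le> n" and "1 \<le> k"
  shows "\<exists>act. is_ext_action n k act \<and>
     (\<forall>act'. is_ext_action n k act' \<longrightarrow>
        (\<forall>\<pi> \<gamma>. \<pi> permutes {1..k} \<and> \<gamma> \<in> Sigma_nk n k \<longrightarrow> act' \<pi> \<gamma> = act \<pi> \<gamma>)) \<and>
     (\<forall>\<pi> \<gamma>. \<pi> permutes {1..k} \<and> \<gamma> \<in> Sigma_nk n k \<longrightarrow>
        Pmap (act \<pi> \<gamma>) = seq_act \<pi> (Pmap \<gamma>)) \<and>
     (\<forall>\<pi> \<gamma>. \<pi> permutes {1..k} \<and> \<gamma> \<in> Sigma_nk n k \<longrightarrow>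
        (seq_act \<pi> (Pmap \<gamma>) = Pmap \<gamma> \<longleftrightarrow> act \<pi> \<gamma> = \<gamma>))"
proof (intro exI conjI)
  note n = assms(1)
  let ?A = "actA n k"
  have AS: "\<And>\<pi> \<gamma>. \<pi> permutes {1..k} \<Longrightarrow> \<gamma> \<in> Sigma_nk n k \<Longrightarrow> spec n k \<pi> \<gamma> (?A \<pi> \<gamma>)"
    by (rule actA_spec[OF n])
  have AE: "\<And>\<pi> \<gamma> \<gamma>'. \<pi> permutes {1..k} \<Longrightarrow> \<gamma> \<in> Sigma_nk n k \<Longrightarrow> spec n k \<pi> \<gamma> \<gamma>' \<Longrightarrow> ?A \<pi> \<gamma> = \<gamma>'"
    by (rule actA_eq[OF n])
  have ASig: "\<And>\<pi> \<gamma>. \<pi> permutes {1..k} \<Longrightarrow> \<gamma> \<in> Sigma_nk n k \<Longrightarrow> ?A \<pi> \<gamma> \<in> Sigma_nk n k"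
    using AS unfolding spec_def by blast
  have sw: "\<And>l \<gamma>. 1 \<le> l \<Longrightarrow> l < k \<Longrightarrow> \<gamma> \<in> Sigma_nk n k \<Longrightarrow> ?A (transpose l (l+1)) \<gamma> = sigma_op l \<gamma>"
  proof -
    fix l \<gamma> assume l: "1 \<le> l" "l < k" and g: "\<gamma> \<in> Sigma_nk n k"
    have sp: "transpose l (l+1) permutes {1..k}" using l by (intro permutes_swap_id) auto
    show "?A (transpose l (l+1)) \<gamma> = sigma_op l \<gamma>"
      using AE[OF sp g] sigma_op_props[OF g l] unfolding spec_def by blast
  qed
  show ext: "is_ext_action n k ?A"
    unfolding is_ext_action_def
  proof (intro conjI allI impI ballI)
    fix \<pi> \<gamma> assume "\<pi> permutes {1..k} \<and> \<gamma> \<in> Sigma_nk n k"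
    then show "?A \<pi> \<gamma> \<in> Sigma_nk n k" using ASig by blast
  next
    fix \<gamma> assume g: "\<gamma> \<in> Sigma_nk n k"
    show "?A id \<gamma> = \<gamma>" using AE[OF permutes_id g] g unfolding spec_def by (simp add: seq_act_id)
  next
    fix \<pi> \<rho> \<gamma> assume h: "\<pi> permutes {1..k} \<and> \<rho> permutes {1..k} \<and> \<gamma> \<in> Sigma_nk n k"
    then have p: "\<pi> permutes {1..k}" and r: "\<rho> permutes {1..k}" and g: "\<gamma> \<in> Sigma_nk n k" by auto
    have pr: "(\<pi> \<circ> \<rho>) permutes {1..k}" by (rule permutes_compose[OF r p])
    have s1: "spec n k \<rho> \<gamma> (?A \<rho> \<gamma>)" by (rule AS[OF r g])
    have g1: "?A \<rho> \<gamma> \<in> Sigma_nk n k" using s1 unfolding spec_def by blast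
    have s2: "spec n k \<pi> (?A \<rho> \<gamma>) (?A \<pi> (?A \<rho> \<gamma>))" by (rule AS[OF p g1])
    have "spec n k (\<pi> \<circ> \<rho>) \<gamma> (?A \<pi> (?A \<rho> \<gamma>))"
      using s1 s2 seq_act_comp[OF p r Sigma_facts(4)[OF g]] unfolding spec_def by simp
    then show "?A (\<pi> \<circ> \<rho>) \<gamma> = ?A \<pi> (?A \<rho> \<gamma>)" by (rule AE[OF pr g])
  next
    fix l \<gamma> assume "1 \<le> l \<and> l < k \<and> \<gamma> \<in> Sigma_nk n k"
    then show "?A (transpose l (l + 1)) \<gamma> = sigma_op l \<gamma>" using sw by blast
  qed
  show "\<forall>act'. is_ext_action n k act' \<longrightarrow>
        (\<forall>\<pi> \<gamma>. \<pi> permutes {1..k} \<and> \<gamma> \<in> Sigma_nk n k \<longrightarrow> act' \<pi> \<gamma> = ?A \<pi> \<gamma>)"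
  proof (intro allI impI)
    fix act' \<pi> \<gamma>
    assume e: "is_ext_action n k act'" and h: "\<pi> permutes {1..k} \<and> \<gamma> \<in> Sigma_nk n k"
    have e1: "\<And>\<pi> \<gamma>. \<pi> permutes {1..k} \<Longrightarrow> \<gamma> \<in> Sigma_nk n k \<Longrightarrow> act' \<pi> \<gamma> \<in> Sigma_nk n k"
      and e2: "\<And>\<gamma>. \<gamma> \<in> Sigma_nk n k \<Longrightarrow> act' id \<gamma> = \<gamma>"
      and e3: "\<And>\<pi> \<rho> \<gamma>. \<pi> permutes {1..k} \<Longrightarrow> \<rho> permutes {1..k} \<Longrightarrow> \<gamma> \<in> Sigma_nk n k \<Longrightarrow>
          act' (\<pi> \<circ> \<rho>) \<gamma> = act' \<pi> (act' \<rho> \<gamma>)"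
      and e4: "\<And>l \<gamma>. 1 \<le> l \<Longrightarrow> l < k \<Longrightarrow> \<gamma> \<in> Sigma_nk n k \<Longrightarrow>
          act' (transpose l (l + 1)) \<gamma> = sigma_op l \<gamma>"
      using e unfolding is_ext_action_def by blast+
    have "\<forall>\<gamma>\<in>Sigma_nk n k. act' \<pi> \<gamma> = ?A \<pi> \<gamma>"
      using h[THEN conjunct1]
    proof (induction rule: adj_induct')
      case id
      show ?case
      proof
        fix \<gamma> assume g: "\<gamma> \<in> Sigma_nk n k"
        show "act' id \<gamma> = ?A id \<gamma>"
          using e2[OF g] AE[OF permutes_id g] g unfolding spec_def by (simp add: seq_act_id)
      qed
    next
      case (step \<pi> l)
      show ?case
      proof
        fix \<gamma> assume g: "\<gamma> \<in> Sigma_nk n k"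
        have sp: "transpose l (l+1) permutes {1..k}" using step(2,3) by (intro permutes_swap_id) auto
        have "act' (transpose l (l+1) \<circ> \<pi>) \<gamma> = act' (transpose l (l+1)) (act' \<pi> \<gamma>)"
          by (rule e3[OF sp step(1) g])
        also have "\<dots> = sigma_op l (act' \<pi> \<gamma>)" by (rule e4[OF step(2,3) e1[OF step(1) g]])
        also have "act' \<pi> \<gamma> = ?A \<pi> \<gamma>" using step(4) g by blast
        also have "sigma_op l (?A \<pi> \<gamma>) = ?A (transpose l (l+1)) (?A \<pi> \<gamma>)"
          by (rule sw[OF step(2,3) ASig[OF step(1) g], symmetric])
        also have "\<dots> = ?A (transpose l (l+1) \<circ> \<pi>) \<gamma>"
        proof -
          have pr: "(transpose l (l+1) \<circ> \<pi>) permutes {1..k}" by (rule permutes_compose[OF step(1) sp])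
          have s1: "spec n k \<pi> \<gamma> (?A \<pi> \<gamma>)" by (rule AS[OF step(1) g])
          have g1: "?A \<pi> \<gamma> \<in> Sigma_nk n k" using s1 unfolding spec_def by blast
          have s2: "spec n k (transpose l (l+1)) (?A \<pi> \<gamma>) (?A (transpose l (l+1)) (?A \<pi> \<gamma>))"
            by (rule AS[OF sp g1])
          have "spec n k (transpose l (l+1) \<circ> \<pi>) \<gamma> (?A (transpose l (l+1)) (?A \<pi> \<gamma>))"
            using s1 s2 seq_act_comp[OF sp step(1) Sigma_facts(4)[OF g]] unfolding spec_def by simp
          then show ?thesis by (rule AE[OF pr g, symmetric])
        qed
        finally show "act' (transpose l (l+1) \<circ> \<pi>) \<gamma> = ?A (transpose l (l+1) \<circ> \<pi>) \<gamma>" .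
      qed
    qed
    then show "act' \<pi> \<gamma> = ?A \<pi> \<gamma>" using h by blast
  qed
  show "\<forall>\<pi> \<gamma>. \<pi> permutes {1..k} \<and> \<gamma> \<in> Sigma_nk n k \<longrightarrow> Pmap (?A \<pi> \<gamma>) = seq_act \<pi> (Pmap \<gamma>)"
    using AS unfolding spec_def by blast
  show "\<forall>\<pi> \<gamma>. \<pi> permutes {1..k} \<and> \<gamma> \<in> Sigma_nk n k \<longrightarrow>
        (seq_act \<pi> (Pmap \<gamma>) = Pmap \<gamma> \<longleftrightarrow> ?A \<pi> \<gamma> = \<gamma>)"
  proof (intro allI impI iffI)
    fix \<pi> \<gamma> assume h: "\<pi> permutes {1..k} \<and> \<gamma> \<in> Sigma_nk n k" and q: "seq_act \<pi> (Pmap \<gamma>) = Pmap \<gamma>"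
    have "spec n k \<pi> \<gamma> \<gamma>" using h q unfolding spec_def by simp
    then show "?A \<pi> \<gamma> = \<gamma>" using AE h by blast
  next
    fix \<pi> \<gamma> assume h: "\<pi> permutes {1..k} \<and> \<gamma> \<in> Sigma_nk n k" and q: "?A \<pi> \<gamma> = \<gamma>"
    have "Pmap (?A \<pi> \<gamma>) = seq_act \<pi> (Pmap \<gamma>)" using AS h unfolding spec_def by blast
    then show "seq_act \<pi> (Pmap \<gamma>) = Pmap \<gamma>" using q by simp
  qed
qed



end
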